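(* Let $K$ be a field and $\beta<\alpha$ countable ordinals. Then there is a $K$-algebra isomorphism $B_{\alpha,1}\cong B_{\beta,1}\boxplus B_{\alpha,1}$.
   Context: For a sequence $\mathcal R=(R_i\mid i\in A)$ of $K$-algebras indexed by an infinite set $A$, $R(A,K,\mathcal R)$ is the $K$-subalgebra $\bigoplus_{i\in A}R_i\oplus1_P\cdot K$ of $P=\prod_{i\in A}R_i$; $\boxplus$ is ring direct product. Define $B_{0,1}=K$; $B_{\beta+1,1}=R(\aleph_0,K,\mathcal R)$ with $\mathcal R$ the constant sequence $R_m=B_{\beta,1}$ ($m<\aleph_0$); for limit $\alpha$, $B_{\alpha,1}=R(\alpha,K,(B_{\beta,1}\mid\beta<\alpha))$. *)

theory Defs
  imports "HOL-Algebra.Algebra"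
begin

text \<open>Uniform carrier type: every algebra in the construction lives inside 'k bt.
  A leaf Lf c is a scalar of K; a node Nd f is a family indexed by naturals
  (index sets used are subsets of nat: the ordinal index sets are represented by
  the field of a well-order on a subset of nat, and aleph_0 by UNIV).\<close>

datatype 'k bt = Lf 'k | Nd "nat \<Rightarrow> 'k bt"

fun lfv :: "'k bt \<Rightarrow> 'k" where
  "lfv (Lf c) = c" | "lfv (Nd f) = undefined"

fun coord :: "'k bt \<Rightarrow> nat \<Rightarrow> 'k bt" where
  "coord (Nd f) i = f i" | "coord (Lf c) i = undefined"

type_synonym 'k alg = "('k, 'k bt) module"

definition base_alg :: "'k ring \<Rightarrow> 'k alg" where
  "base_alg K = \<lparr>carrier = Lf ` carrier K,
     monoid.mult = (\<lambda>x y. Lf (lfv x \<otimes>\<^bsub>K\<^esub> lfv y)), one = Lf \<one>\<^bsub>K\<^esub>,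
     ring.zero = Lf \<zero>\<^bsub>K\<^esub>, add = (\<lambda>x y. Lf (lfv x \<oplus>\<^bsub>K\<^esub> lfv y)),
     smult = (\<lambda>a x. Lf (a \<otimes>\<^bsub>K\<^esub> lfv x))\<rparr>"

definition prod_alg :: "'k ring \<Rightarrow> nat set \<Rightarrow> (nat \<Rightarrow> 'k alg) \<Rightarrow> 'k alg" where
  "prod_alg K A Rs = \<lparr>carrier = {x. \<exists>f. x = Nd f \<and> (\<forall>i\<in>A. f i \<in> carrier (Rs i))
                                        \<and> (\<forall>i. i \<notin> A \<longrightarrow> f i = Lf \<zero>\<^bsub>K\<^esub>)},
     monoid.mult = (\<lambda>x y. Nd (\<lambda>i. if i \<in> A then coord x i \<otimes>\<^bsub>Rs i\<^esub> coord y i else Lf \<zero>\<^bsub>K\<^esub>)),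
     one = Nd (\<lambda>i. if i \<in> A then \<one>\<^bsub>Rs i\<^esub> else Lf \<zero>\<^bsub>K\<^esub>),
     ring.zero = Nd (\<lambda>i. if i \<in> A then \<zero>\<^bsub>Rs i\<^esub> else Lf \<zero>\<^bsub>K\<^esub>),
     add = (\<lambda>x y. Nd (\<lambda>i. if i \<in> A then coord x i \<oplus>\<^bsub>Rs i\<^esub> coord y i else Lf \<zero>\<^bsub>K\<^esub>)),
     smult = (\<lambda>a x. Nd (\<lambda>i. if i \<in> A then a \<odot>\<^bsub>Rs i\<^esub> coord x i else Lf \<zero>\<^bsub>K\<^esub>))\<rparr>"

definition R_alg :: "'k ring \<Rightarrow> nat set \<Rightarrow> (nat \<Rightarrow> 'k alg) \<Rightarrow> 'k alg" where
  "R_alg K A Rs = (let P = prod_alg K A Rs in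
     P\<lparr>carrier := {s \<oplus>\<^bsub>P\<^esub> (c \<odot>\<^bsub>P\<^esub> \<one>\<^bsub>P\<^esub>) | s c.
        s \<in> carrier P \<and> finite {i \<in> A. coord s i \<noteq> \<zero>\<^bsub>Rs i\<^esub>} \<and> c \<in> carrier K}\<rparr>)"

definition ring_dprod :: "'k ring \<Rightarrow> 'k alg \<Rightarrow> 'k alg \<Rightarrow> 'k alg" where
  "ring_dprod K M N = prod_alg K {0, 1} (\<lambda>i. if i = 0 then M else N)"

text \<open>S is the set of elements of the well-order r
  that represents the current ordinal (S = all elements below a point, or the whole field),
  and rec x is B at the ordinal of the initial segment strictly below x.
  S empty: ordinal 0.  S has a maximum m: successor of the ordinal of underS r m.
  Otherwise: limit ordinal, indexed by its elements (i.e. by the smaller ordinals).\<close>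
definition B_step :: "'k ring \<Rightarrow> nat rel \<Rightarrow> nat set \<Rightarrow> (nat \<Rightarrow> 'k alg) \<Rightarrow> 'k alg" where
  "B_step K r S rec =
     (if S = {} then base_alg K
      else if (\<exists>m\<in>S. \<forall>y\<in>S. (y, m) \<in> r)
        then R_alg K UNIV (\<lambda>_. rec (THE m. m \<in> S \<and> (\<forall>y\<in>S. (y, m) \<in> r)))
      else R_alg K S rec)"

definition B_below :: "'k ring \<Rightarrow> nat rel \<Rightarrow> nat \<Rightarrow> 'k alg" where
  "B_below K r = wfrec (r - Id) (\<lambda>rec x. B_step K r (underS r x) rec)"

text \<open>B_{alpha,1} where alpha is the order type of the well-order r (a countable ordinal).\<close>
definition B_ord :: "'k ring \<Rightarrow> nat rel \<Rightarrow> 'k alg" where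
  "B_ord K r = B_step K r (Field r) (B_below K r)"

definition alg_iso :: "'k ring \<Rightarrow> ('k, 'a, 'c) module_scheme \<Rightarrow> ('k, 'b, 'd) module_scheme
                        \<Rightarrow> ('a \<Rightarrow> 'b) set" where
  "alg_iso K M N = {h. h \<in> ring_iso M N \<and>
      (\<forall>a\<in>carrier K. \<forall>x\<in>carrier M. h (a \<odot>\<^bsub>M\<^esub> x) = a \<odot>\<^bsub>N\<^esub> h x)}"

end

theory Submission
  imports Defs
begin


definition good :: "'k ring \<Rightarrow> 'k alg \<Rightarrow> bool" where
 "good K M \<longleftrightarrow> abelian_group M \<and> \<one>\<^bsub>M\<^esub> \<in> carrier M \<and> (\<forall>c\<in>carrier K. c \<odot>\<^bsub>M\<^esub> \<one>\<^bsub>M\<^esub> \<in> carrier M)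
   \<and> (\<forall>c\<in>carrier K. \<forall>d\<in>carrier K. (c \<oplus>\<^bsub>K\<^esub> d) \<odot>\<^bsub>M\<^esub> \<one>\<^bsub>M\<^esub> = c \<odot>\<^bsub>M\<^esub> \<one>\<^bsub>M\<^esub> \<oplus>\<^bsub>M\<^esub> d \<odot>\<^bsub>M\<^esub> \<one>\<^bsub>M\<^esub>)
   \<and> \<one>\<^bsub>K\<^esub> \<odot>\<^bsub>M\<^esub> \<one>\<^bsub>M\<^esub> = \<one>\<^bsub>M\<^esub>"

lemma field_ag: "field K \<Longrightarrow> abelian_group K"
  using fieldE(1) cring.axioms(1) ring.is_abelian_group by blast

lemma good_zero:
  assumes "field K" "good K M"
  shows "\<zero>\<^bsub>K\<^esub> \<odot>\<^bsub>M\<^esub> \<one>\<^bsub>M\<^esub> = \<zero>\<^bsub>M\<^esub>"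
proof -
  interpret K: abelian_group K using field_ag assms(1) .
  interpret M: abelian_group M using assms(2) good_def by blast
  let ?x = "\<zero>\<^bsub>K\<^esub> \<odot>\<^bsub>M\<^esub> \<one>\<^bsub>M\<^esub>"
  have x: "?x \<in> carrier M" using assms(2) unfolding good_def by blast
  have "?x \<oplus>\<^bsub>M\<^esub> ?x = ?x" using assms(2) unfolding good_def
    by (metis K.l_zero K.zero_closed)
  then have "?x \<oplus>\<^bsub>M\<^esub> ?x = \<zero>\<^bsub>M\<^esub> \<oplus>\<^bsub>M\<^esub> ?x" using x by simp
  then show ?thesis using x M.add.right_cancel by blast
qed

lemma good_neg:
  assumes "field K" "good K M" "c \<in> carrier K"
  shows "(\<ominus>\<^bsub>K\<^esub> c) \<odot>\<^bsub>M\<^esub> \<one>\<^bsub>M\<^esub> = \<ominus>\<^bsub>M\<^esub> (c \<odot>\<^bsub>M\<^esub> \<one>\<^bsub>M\<^esub>)"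
proof -
  interpret K: abelian_group K using field_ag assms(1) .
  interpret M: abelian_group M using assms(2) good_def by blast
  have "(\<ominus>\<^bsub>K\<^esub> c) \<odot>\<^bsub>M\<^esub> \<one>\<^bsub>M\<^esub> \<oplus>\<^bsub>M\<^esub> c \<odot>\<^bsub>M\<^esub> \<one>\<^bsub>M\<^esub> = \<zero>\<^bsub>M\<^esub>"
    using assms good_zero[OF assms(1,2)] unfolding good_def
    by (metis K.a_inv_closed K.l_neg)
  then show ?thesis using assms unfolding good_def
    by (metis K.a_inv_closed M.minus_equality)
qed

lemma agc: "abelian_group G \<Longrightarrow> x \<in> carrier G \<Longrightarrow> y \<in> carrier G \<Longrightarrow> x \<oplus>\<^bsub>G\<^esub> y \<in> carrier G"
  by (rule abelian_monoid.a_closed[OF abelian_group.axioms(1)])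
lemma agz: "abelian_group G \<Longrightarrow> x \<in> carrier G \<Longrightarrow> \<zero>\<^bsub>G\<^esub> \<oplus>\<^bsub>G\<^esub> x = x"
  by (rule abelian_monoid.l_zero[OF abelian_group.axioms(1)])

definition mk :: "'k ring \<Rightarrow> nat set \<Rightarrow> (nat \<Rightarrow> 'k bt) \<Rightarrow> 'k bt" where
  "mk K A F = Nd (\<lambda>i. if i \<in> A then F i else Lf \<zero>\<^bsub>K\<^esub>)"

lemma coord_mk[simp]: "coord (mk K A F) i = (if i \<in> A then F i else Lf \<zero>\<^bsub>K\<^esub>)"
  by (simp add: mk_def)

lemma mk_eq: "(\<And>i. i \<in> A \<Longrightarrow> F i = G i) \<Longrightarrow> mk K A F = mk K A G"
  unfolding mk_def by auto

lemma mk_cong[cong]: "A = B \<Longrightarrow> (\<And>i. i \<in> B =simp=> F i = G i) \<Longrightarrow> mk K A F = mk K B G"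
  unfolding simp_implies_def by (auto intro!: mk_eq)

lemma prod_ops[simp]:
  "monoid.mult (prod_alg K A Rs) x y = mk K A (\<lambda>i. coord x i \<otimes>\<^bsub>Rs i\<^esub> coord y i)"
  "add (prod_alg K A Rs) x y = mk K A (\<lambda>i. coord x i \<oplus>\<^bsub>Rs i\<^esub> coord y i)"
  "one (prod_alg K A Rs) = mk K A (\<lambda>i. \<one>\<^bsub>Rs i\<^esub>)"
  "ring.zero (prod_alg K A Rs) = mk K A (\<lambda>i. \<zero>\<^bsub>Rs i\<^esub>)"
  "smult (prod_alg K A Rs) a x = mk K A (\<lambda>i. a \<odot>\<^bsub>Rs i\<^esub> coord x i)"
  by (simp_all add: prod_alg_def mk_def)

lemma in_prod: "x \<in> carrier (prod_alg K A Rs) \<longleftrightarrow>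
   (\<exists>F. x = mk K A F) \<and> (\<forall>i\<in>A. coord x i \<in> carrier (Rs i))"
  unfolding prod_alg_def mk_def by (auto, metis coord.simps(1))

lemma mk_in_prod[simp]: "mk K A F \<in> carrier (prod_alg K A Rs) \<longleftrightarrow> (\<forall>i\<in>A. F i \<in> carrier (Rs i))"
  unfolding in_prod by auto

lemma prod_eq:
  assumes "x \<in> carrier (prod_alg K A Rs)" "y \<in> carrier (prod_alg K A Rs')"
    "\<And>i. i \<in> A \<Longrightarrow> coord x i = coord y i"
  shows "x = y"
proof -
  obtain F G where "x = mk K A F" "y = mk K A G" using assms in_prod by metis
  then show ?thesis using assms(3) by (auto intro!: mk_eq)
qed

lemma coord_in: "x \<in> carrier (prod_alg K A Rs) \<Longrightarrow> i \<in> A \<Longrightarrow> coord x i \<in> carrier (Rs i)"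
  using in_prod by blast

lemma prod_mk_coord: "x \<in> carrier (prod_alg K A Rs) \<Longrightarrow> x = mk K A (coord x)"
  by (rule prod_eq[where Rs'=Rs]) (auto simp: coord_in)

definition Rcar :: "'k ring \<Rightarrow> nat set \<Rightarrow> (nat \<Rightarrow> 'k alg) \<Rightarrow> 'k bt set" where
  "Rcar K A Rs = {x \<in> carrier (prod_alg K A Rs). \<exists>c\<in>carrier K.
       finite {i\<in>A. coord x i \<noteq> c \<odot>\<^bsub>Rs i\<^esub> \<one>\<^bsub>Rs i\<^esub>}}"

lemma Rcar_1:
  assumes K: "field K" and g: "\<And>i. i \<in> A \<Longrightarrow> good K (Rs i)"
    and s: "s \<in> carrier (prod_alg K A Rs)" and fin: "finite {i \<in> A. coord s i \<noteq> \<zero>\<^bsub>Rs i\<^esub>}"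
    and c: "c \<in> carrier K"
  shows "add (prod_alg K A Rs) s (smult (prod_alg K A Rs) c (one (prod_alg K A Rs))) \<in> Rcar K A Rs"
proof -
  let ?P = "prod_alg K A Rs"
  let ?x = "add ?P s (smult ?P c (one ?P))"
  have ag: "\<And>i. i \<in> A \<Longrightarrow> abelian_group (Rs i)" using g unfolding good_def by blast
  have sm: "\<And>i c. i \<in> A \<Longrightarrow> c \<in> carrier K \<Longrightarrow> c \<odot>\<^bsub>Rs i\<^esub> \<one>\<^bsub>Rs i\<^esub> \<in> carrier (Rs i)"
    using g unfolding good_def by blast
  have cx: "\<And>i. i \<in> A \<Longrightarrow> coord ?x i = coord s i \<oplus>\<^bsub>Rs i\<^esub> c \<odot>\<^bsub>Rs i\<^esub> \<one>\<^bsub>Rs i\<^esub>"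
    by simp
  have "?x \<in> carrier ?P" unfolding prod_ops(2) mk_in_prod
  proof
    fix i assume i: "i \<in> A"
    show "coord s i \<oplus>\<^bsub>Rs i\<^esub> coord (c \<odot>\<^bsub>?P\<^esub> \<one>\<^bsub>?P\<^esub>) i \<in> carrier (Rs i)"
      using i agc[OF ag[OF i] coord_in[OF s i] sm[OF i c]] by simp
  qed
  moreover have "{i\<in>A. coord ?x i \<noteq> c \<odot>\<^bsub>Rs i\<^esub> \<one>\<^bsub>Rs i\<^esub>} \<subseteq> {i \<in> A. coord s i \<noteq> \<zero>\<^bsub>Rs i\<^esub>}"
  proof (rule subsetI, rule ccontr)
    fix i assume "i \<in> {i\<in>A. coord ?x i \<noteq> c \<odot>\<^bsub>Rs i\<^esub> \<one>\<^bsub>Rs i\<^esub>}" "i \<notin> {i \<in> A. coord s i \<noteq> \<zero>\<^bsub>Rs i\<^esub>}"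
    then have i: "i \<in> A" and "coord ?x i \<noteq> c \<odot>\<^bsub>Rs i\<^esub> \<one>\<^bsub>Rs i\<^esub>" "coord s i = \<zero>\<^bsub>Rs i\<^esub>" by auto
    then show False using cx[OF i] agz[OF ag[OF i] sm[OF i c]] by simp
  qed
  ultimately show ?thesis unfolding Rcar_def using fin c finite_subset by blast
qed

lemma Rcar_2:
  assumes K: "field K" and g: "\<And>i. i \<in> A \<Longrightarrow> good K (Rs i)"
    and xR: "x \<in> Rcar K A Rs"
  shows "\<exists>s c. x = add (prod_alg K A Rs) s (smult (prod_alg K A Rs) c (one (prod_alg K A Rs)))
     \<and> s \<in> carrier (prod_alg K A Rs) \<and> finite {i \<in> A. coord s i \<noteq> \<zero>\<^bsub>Rs i\<^esub>} \<and> c \<in> carrier K"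
proof -
  let ?P = "prod_alg K A Rs"
  have ag: "\<And>i. i \<in> A \<Longrightarrow> abelian_group (Rs i)" using g unfolding good_def by blast
  have sm: "\<And>i c. i \<in> A \<Longrightarrow> c \<in> carrier K \<Longrightarrow> c \<odot>\<^bsub>Rs i\<^esub> \<one>\<^bsub>Rs i\<^esub> \<in> carrier (Rs i)"
    using g unfolding good_def by blast
  obtain c where x: "x \<in> carrier ?P" and c: "c \<in> carrier K"
    and fin: "finite {i\<in>A. coord x i \<noteq> c \<odot>\<^bsub>Rs i\<^esub> \<one>\<^bsub>Rs i\<^esub>}" using xR unfolding Rcar_def by blast
  define s where "s = mk K A (\<lambda>i. coord x i \<oplus>\<^bsub>Rs i\<^esub> \<ominus>\<^bsub>Rs i\<^esub> (c \<odot>\<^bsub>Rs i\<^esub> \<one>\<^bsub>Rs i\<^esub>))"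
  have xi: "\<And>i. i \<in> A \<Longrightarrow> coord x i \<in> carrier (Rs i)" using x coord_in by blast
  have s: "s \<in> carrier ?P" unfolding s_def mk_in_prod
  proof
    fix i assume i: "i \<in> A"
    show "coord x i \<oplus>\<^bsub>Rs i\<^esub> \<ominus>\<^bsub>Rs i\<^esub> (c \<odot>\<^bsub>Rs i\<^esub> \<one>\<^bsub>Rs i\<^esub>) \<in> carrier (Rs i)"
      using agc[OF ag[OF i] xi[OF i] abelian_group.a_inv_closed[OF ag[OF i] sm[OF i c]]] .
  qed
  have "{i \<in> A. coord s i \<noteq> \<zero>\<^bsub>Rs i\<^esub>} \<subseteq> {i\<in>A. coord x i \<noteq> c \<odot>\<^bsub>Rs i\<^esub> \<one>\<^bsub>Rs i\<^esub>}"
  proof (rule subsetI, rule ccontr)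
    fix i assume "i \<in> {i \<in> A. coord s i \<noteq> \<zero>\<^bsub>Rs i\<^esub>}" "i \<notin> {i\<in>A. coord x i \<noteq> c \<odot>\<^bsub>Rs i\<^esub> \<one>\<^bsub>Rs i\<^esub>}"
    then have i: "i \<in> A" and "coord s i \<noteq> \<zero>\<^bsub>Rs i\<^esub>" "coord x i = c \<odot>\<^bsub>Rs i\<^esub> \<one>\<^bsub>Rs i\<^esub>" by auto
    then show False unfolding s_def using abelian_group.r_neg[OF ag[OF i] sm[OF i c]] by simp
  qed
  then have fs: "finite {i \<in> A. coord s i \<noteq> \<zero>\<^bsub>Rs i\<^esub>}" using fin finite_subset by blast
  have "x = s \<oplus>\<^bsub>?P\<^esub> (c \<odot>\<^bsub>?P\<^esub> \<one>\<^bsub>?P\<^esub>)"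
  proof (rule prod_eq[OF x, where Rs'=Rs])
    show "s \<oplus>\<^bsub>?P\<^esub> (c \<odot>\<^bsub>?P\<^esub> \<one>\<^bsub>?P\<^esub>) \<in> carrier ?P"
      unfolding prod_ops(2) mk_in_prod
    proof
      fix i assume i: "i \<in> A"
      show "coord s i \<oplus>\<^bsub>Rs i\<^esub> coord (c \<odot>\<^bsub>?P\<^esub> \<one>\<^bsub>?P\<^esub>) i \<in> carrier (Rs i)"
        using i agc[OF ag[OF i] coord_in[OF s i] sm[OF i c]] by simp
    qed
    fix i assume i: "i \<in> A"
    interpret M: abelian_group "Rs i" using ag i .
    show "coord x i = coord (s \<oplus>\<^bsub>?P\<^esub> (c \<odot>\<^bsub>?P\<^esub> \<one>\<^bsub>?P\<^esub>)) i"
      using i xi[OF i] sm[OF i c] unfolding s_def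
      by (simp add: M.add.m_assoc M.l_neg)
  qed
  then show ?thesis using s fs c by blast
qed

lemma R_alg_char:
  assumes K: "field K" and g: "\<And>i. i \<in> A \<Longrightarrow> good K (Rs i)"
  shows "R_alg K A Rs = (prod_alg K A Rs)\<lparr>carrier := Rcar K A Rs\<rparr>"
proof -
  let ?P = "prod_alg K A Rs"
  have "{s \<oplus>\<^bsub>?P\<^esub> (c \<odot>\<^bsub>?P\<^esub> \<one>\<^bsub>?P\<^esub>) | s c.
        s \<in> carrier ?P \<and> finite {i \<in> A. coord s i \<noteq> \<zero>\<^bsub>Rs i\<^esub>} \<and> c \<in> carrier K} = Rcar K A Rs"
  proof (intro equalityI subsetI)
    fix x assume "x \<in> {s \<oplus>\<^bsub>?P\<^esub> (c \<odot>\<^bsub>?P\<^esub> \<one>\<^bsub>?P\<^esub>) | s c.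
        s \<in> carrier ?P \<and> finite {i \<in> A. coord s i \<noteq> \<zero>\<^bsub>Rs i\<^esub>} \<and> c \<in> carrier K}"
    then show "x \<in> Rcar K A Rs"
      apply (elim CollectE exE conjE) apply (simp only:)
      by (rule Rcar_1[OF K g])
  next
    fix x assume "x \<in> Rcar K A Rs"
    from Rcar_2[OF K g this] show "x \<in> {s \<oplus>\<^bsub>?P\<^esub> (c \<odot>\<^bsub>?P\<^esub> \<one>\<^bsub>?P\<^esub>) | s c.
        s \<in> carrier ?P \<and> finite {i \<in> A. coord s i \<noteq> \<zero>\<^bsub>Rs i\<^esub>} \<and> c \<in> carrier K}"
      by (simp only: mem_Collect_eq)
  qed
  then show ?thesis unfolding R_alg_def Let_def by (simp only:)
qed


lemma good_base: assumes K: "field K" shows "good K (base_alg K)"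
proof -
  interpret K: cring K using fieldE(1)[OF K] .
  have ag: "abelian_group (base_alg K)"
  proof (rule abelian_groupI)
    fix x y assume "x \<in> carrier (base_alg K)" "y \<in> carrier (base_alg K)"
    then show "x \<oplus>\<^bsub>base_alg K\<^esub> y \<in> carrier (base_alg K)" unfolding base_alg_def by auto
  next
    show "\<zero>\<^bsub>base_alg K\<^esub> \<in> carrier (base_alg K)" unfolding base_alg_def by auto
  next
    fix x y z assume "x \<in> carrier (base_alg K)" "y \<in> carrier (base_alg K)" "z \<in> carrier (base_alg K)"
    then show "x \<oplus>\<^bsub>base_alg K\<^esub> y \<oplus>\<^bsub>base_alg K\<^esub> z = x \<oplus>\<^bsub>base_alg K\<^esub> (y \<oplus>\<^bsub>base_alg K\<^esub> z)"
      unfolding base_alg_def by (auto simp: K.add.m_assoc)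
  next
    fix x y assume "x \<in> carrier (base_alg K)" "y \<in> carrier (base_alg K)"
    then show "x \<oplus>\<^bsub>base_alg K\<^esub> y = y \<oplus>\<^bsub>base_alg K\<^esub> x"
      unfolding base_alg_def by (auto simp: K.a_comm)
  next
    fix x assume "x \<in> carrier (base_alg K)"
    then show "\<zero>\<^bsub>base_alg K\<^esub> \<oplus>\<^bsub>base_alg K\<^esub> x = x"
      unfolding base_alg_def by auto
  next
    fix x assume "x \<in> carrier (base_alg K)"
    then obtain a where a: "a \<in> carrier K" "x = Lf a" unfolding base_alg_def by auto
    have "Lf (\<ominus>\<^bsub>K\<^esub> a) \<in> carrier (base_alg K) \<and> Lf (\<ominus>\<^bsub>K\<^esub> a) \<oplus>\<^bsub>base_alg K\<^esub> x = \<zero>\<^bsub>base_alg K\<^esub>"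
      using a unfolding base_alg_def by (auto simp: K.l_neg)
    then show "\<exists>y\<in>carrier (base_alg K). y \<oplus>\<^bsub>base_alg K\<^esub> x = \<zero>\<^bsub>base_alg K\<^esub>" by blast
  qed
  show ?thesis unfolding good_def
    apply (intro conjI ag)
    unfolding base_alg_def by (auto simp: K.l_distr)
qed

lemma RcarI: "x \<in> carrier (prod_alg K A Rs) \<Longrightarrow> c \<in> carrier K \<Longrightarrow>
   finite {i\<in>A. coord x i \<noteq> c \<odot>\<^bsub>Rs i\<^esub> \<one>\<^bsub>Rs i\<^esub>} \<Longrightarrow> x \<in> Rcar K A Rs"
  unfolding Rcar_def by blast

lemma RcarE: assumes "x \<in> Rcar K A Rs"
  obtains c where "x \<in> carrier (prod_alg K A Rs)" "c \<in> carrier K"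
   "finite {i\<in>A. coord x i \<noteq> c \<odot>\<^bsub>Rs i\<^esub> \<one>\<^bsub>Rs i\<^esub>}"
  using assms unfolding Rcar_def by blast

lemma Rcar_sub: "x \<in> Rcar K A Rs \<Longrightarrow> x \<in> carrier (prod_alg K A Rs)"
  unfolding Rcar_def by blast

lemma good_R:
  assumes K: "field K" and g: "\<And>i. i \<in> A \<Longrightarrow> good K (Rs i)"
  shows "good K (R_alg K A Rs)"
proof -
  interpret K: cring K using fieldE(1)[OF K] .
  let ?P = "prod_alg K A Rs"
  let ?Q = "?P\<lparr>carrier := Rcar K A Rs\<rparr>"
  have ag: "\<And>i. i \<in> A \<Longrightarrow> abelian_group (Rs i)" using g unfolding good_def by blast
  have one: "\<And>i. i \<in> A \<Longrightarrow> \<one>\<^bsub>Rs i\<^esub> \<in> carrier (Rs i)" using g unfolding good_def by blast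
  have sm: "\<And>i c. i \<in> A \<Longrightarrow> c \<in> carrier K \<Longrightarrow> c \<odot>\<^bsub>Rs i\<^esub> \<one>\<^bsub>Rs i\<^esub> \<in> carrier (Rs i)"
    using g unfolding good_def by blast
  have dist: "\<And>i c d. i \<in> A \<Longrightarrow> c \<in> carrier K \<Longrightarrow> d \<in> carrier K \<Longrightarrow>
      (c \<oplus>\<^bsub>K\<^esub> d) \<odot>\<^bsub>Rs i\<^esub> \<one>\<^bsub>Rs i\<^esub> = c \<odot>\<^bsub>Rs i\<^esub> \<one>\<^bsub>Rs i\<^esub> \<oplus>\<^bsub>Rs i\<^esub> d \<odot>\<^bsub>Rs i\<^esub> \<one>\<^bsub>Rs i\<^esub>"
    using g unfolding good_def by blast
  have oo: "\<And>i. i \<in> A \<Longrightarrow> \<one>\<^bsub>K\<^esub> \<odot>\<^bsub>Rs i\<^esub> \<one>\<^bsub>Rs i\<^esub> = \<one>\<^bsub>Rs i\<^esub>"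
    using g unfolding good_def by blast
  have xin: "\<And>x i. x \<in> Rcar K A Rs \<Longrightarrow> i \<in> A \<Longrightarrow> coord x i \<in> carrier (Rs i)"
    using Rcar_sub coord_in by blast
  have agQ: "abelian_group ?Q"
  proof (rule abelian_groupI)
    fix x y assume x: "x \<in> carrier ?Q" and y: "y \<in> carrier ?Q"
    from x obtain c where xP: "x \<in> carrier ?P" and c: "c \<in> carrier K"
      and fx: "finite {i\<in>A. coord x i \<noteq> c \<odot>\<^bsub>Rs i\<^esub> \<one>\<^bsub>Rs i\<^esub>}" by (auto elim: RcarE)
    from y obtain d where yP: "y \<in> carrier ?P" and d: "d \<in> carrier K"
      and fy: "finite {i\<in>A. coord y i \<noteq> d \<odot>\<^bsub>Rs i\<^esub> \<one>\<^bsub>Rs i\<^esub>}" by (auto elim: RcarE)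
    have xyP: "x \<oplus>\<^bsub>?P\<^esub> y \<in> carrier ?P" unfolding prod_ops(2) mk_in_prod
      using agc[OF ag coord_in[OF xP] coord_in[OF yP]] by blast
    have sub: "{i\<in>A. coord (x \<oplus>\<^bsub>?P\<^esub> y) i \<noteq> (c \<oplus>\<^bsub>K\<^esub> d) \<odot>\<^bsub>Rs i\<^esub> \<one>\<^bsub>Rs i\<^esub>} \<subseteq>
       {i\<in>A. coord x i \<noteq> c \<odot>\<^bsub>Rs i\<^esub> \<one>\<^bsub>Rs i\<^esub>} \<union> {i\<in>A. coord y i \<noteq> d \<odot>\<^bsub>Rs i\<^esub> \<one>\<^bsub>Rs i\<^esub>}"
    proof (rule subsetI, rule ccontr)
      fix i assume a1: "i \<in> {i\<in>A. coord (x \<oplus>\<^bsub>?P\<^esub> y) i \<noteq> (c \<oplus>\<^bsub>K\<^esub> d) \<odot>\<^bsub>Rs i\<^esub> \<one>\<^bsub>Rs i\<^esub>}"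
        and a2: "i \<notin> {i\<in>A. coord x i \<noteq> c \<odot>\<^bsub>Rs i\<^esub> \<one>\<^bsub>Rs i\<^esub>} \<union> {i\<in>A. coord y i \<noteq> d \<odot>\<^bsub>Rs i\<^esub> \<one>\<^bsub>Rs i\<^esub>}"
      from a1 have i: "i \<in> A" by simp
      from a2 i have "coord x i = c \<odot>\<^bsub>Rs i\<^esub> \<one>\<^bsub>Rs i\<^esub>" "coord y i = d \<odot>\<^bsub>Rs i\<^esub> \<one>\<^bsub>Rs i\<^esub>" by simp_all
      then show False using a1 i dist[OF i c d] by simp
    qed
    have fin: "finite {i\<in>A. coord (x \<oplus>\<^bsub>?P\<^esub> y) i \<noteq> (c \<oplus>\<^bsub>K\<^esub> d) \<odot>\<^bsub>Rs i\<^esub> \<one>\<^bsub>Rs i\<^esub>}"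
      by (rule finite_subset[OF sub]) (use fx fy in simp)
    have "x \<oplus>\<^bsub>?P\<^esub> y \<in> Rcar K A Rs" by (rule RcarI[OF xyP K.add.m_closed[OF c d] fin])
    then show "x \<oplus>\<^bsub>?Q\<^esub> y \<in> carrier ?Q" by simp
  next
    have "mk K A (\<lambda>i. \<zero>\<^bsub>Rs i\<^esub>) \<in> Rcar K A Rs"
    proof (rule RcarI[where c="\<zero>\<^bsub>K\<^esub>"])
      show "mk K A (\<lambda>i. \<zero>\<^bsub>Rs i\<^esub>) \<in> carrier ?P" unfolding mk_in_prod
        using abelian_monoid.zero_closed[OF abelian_group.axioms(1)[OF ag]] by blast
      have "{i \<in> A. coord (mk K A (\<lambda>i. \<zero>\<^bsub>Rs i\<^esub>)) i \<noteq> \<zero>\<^bsub>K\<^esub> \<odot>\<^bsub>Rs i\<^esub> \<one>\<^bsub>Rs i\<^esub>} = {}"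
        using good_zero[OF K g] by force
      then show "finite {i \<in> A. coord (mk K A (\<lambda>i. \<zero>\<^bsub>Rs i\<^esub>)) i \<noteq> \<zero>\<^bsub>K\<^esub> \<odot>\<^bsub>Rs i\<^esub> \<one>\<^bsub>Rs i\<^esub>}"
        by simp
    qed simp
    then show "\<zero>\<^bsub>?Q\<^esub> \<in> carrier ?Q" by simp
  next
    fix x y z assume x: "x \<in> carrier ?Q" and y: "y \<in> carrier ?Q" and z: "z \<in> carrier ?Q"
    show "x \<oplus>\<^bsub>?Q\<^esub> y \<oplus>\<^bsub>?Q\<^esub> z = x \<oplus>\<^bsub>?Q\<^esub> (y \<oplus>\<^bsub>?Q\<^esub> z)"
      apply simp apply (rule mk_eq)
      using x y z xin abelian_group.axioms(1)[OF ag] abelian_monoid.a_assoc by fastforce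
  next
    fix x y assume x: "x \<in> carrier ?Q" and y: "y \<in> carrier ?Q"
    show "x \<oplus>\<^bsub>?Q\<^esub> y = y \<oplus>\<^bsub>?Q\<^esub> x"
      apply simp apply (rule mk_eq)
      using x y xin abelian_group.axioms(1)[OF ag] abelian_monoid.a_comm by fastforce
  next
    fix x assume x: "x \<in> carrier ?Q"
    have "mk K A (\<lambda>i. \<zero>\<^bsub>Rs i\<^esub> \<oplus>\<^bsub>Rs i\<^esub> coord x i) = mk K A (coord x)"
      apply (rule mk_eq) using x xin agz[OF ag] by simp
    also have "\<dots> = x" using prod_mk_coord[OF Rcar_sub[of x K A Rs]] x by simp
    finally show "\<zero>\<^bsub>?Q\<^esub> \<oplus>\<^bsub>?Q\<^esub> x = x" by simp
  next
    fix x assume x: "x \<in> carrier ?Q"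
    from x obtain c where xP: "x \<in> carrier ?P" and c: "c \<in> carrier K"
      and fx: "finite {i\<in>A. coord x i \<noteq> c \<odot>\<^bsub>Rs i\<^esub> \<one>\<^bsub>Rs i\<^esub>}" by (auto elim: RcarE)
    let ?y = "mk K A (\<lambda>i. \<ominus>\<^bsub>Rs i\<^esub> coord x i)"
    have "?y \<in> Rcar K A Rs"
    proof (rule RcarI[where c="\<ominus>\<^bsub>K\<^esub> c"])
      show "?y \<in> carrier ?P" using abelian_group.a_inv_closed[OF ag coord_in[OF xP]] by simp
      have "{i \<in> A. coord ?y i \<noteq> (\<ominus>\<^bsub>K\<^esub> c) \<odot>\<^bsub>Rs i\<^esub> \<one>\<^bsub>Rs i\<^esub>} \<subseteq> {i\<in>A. coord x i \<noteq> c \<odot>\<^bsub>Rs i\<^esub> \<one>\<^bsub>Rs i\<^esub>}"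
        using good_neg[OF K g c] by force
      then show "finite {i \<in> A. coord ?y i \<noteq> (\<ominus>\<^bsub>K\<^esub> c) \<odot>\<^bsub>Rs i\<^esub> \<one>\<^bsub>Rs i\<^esub>}"
        using fx finite_subset by blast
    qed (use c in simp)
    then have c1: "?y \<in> carrier ?Q" by simp
    have c2: "?y \<oplus>\<^bsub>?Q\<^esub> x = \<zero>\<^bsub>?Q\<^esub>"
      using coord_in[OF xP] abelian_group.l_neg[OF ag] by simp
    from c1 c2 show "\<exists>y\<in>carrier ?Q. y \<oplus>\<^bsub>?Q\<^esub> x = \<zero>\<^bsub>?Q\<^esub>" by blast
  qed
  have oneQ: "\<one>\<^bsub>?Q\<^esub> \<in> carrier ?Q"
  proof -
    have "mk K A (\<lambda>i. \<one>\<^bsub>Rs i\<^esub>) \<in> Rcar K A Rs"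
      by (rule RcarI[where c="\<one>\<^bsub>K\<^esub>"]) (use one oo in auto)
    then show ?thesis by simp
  qed
  have smQ: "\<forall>c\<in>carrier K. c \<odot>\<^bsub>?Q\<^esub> \<one>\<^bsub>?Q\<^esub> \<in> carrier ?Q"
  proof
    fix c assume c: "c \<in> carrier K"
    have "mk K A (\<lambda>i. c \<odot>\<^bsub>Rs i\<^esub> coord (mk K A (\<lambda>i. \<one>\<^bsub>Rs i\<^esub>)) i) \<in> Rcar K A Rs"
      by (rule RcarI[where c=c]) (use sm c in auto)
    then show "c \<odot>\<^bsub>?Q\<^esub> \<one>\<^bsub>?Q\<^esub> \<in> carrier ?Q" by simp
  qed
  have distQ: "\<forall>c\<in>carrier K. \<forall>d\<in>carrier K. (c \<oplus>\<^bsub>K\<^esub> d) \<odot>\<^bsub>?Q\<^esub> \<one>\<^bsub>?Q\<^esub> = c \<odot>\<^bsub>?Q\<^esub> \<one>\<^bsub>?Q\<^esub> \<oplus>\<^bsub>?Q\<^esub> d \<odot>\<^bsub>?Q\<^esub> \<one>\<^bsub>?Q\<^esub>"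
    apply (intro ballI) apply simp apply (rule mk_eq) using dist by simp
  have ooQ: "\<one>\<^bsub>K\<^esub> \<odot>\<^bsub>?Q\<^esub> \<one>\<^bsub>?Q\<^esub> = \<one>\<^bsub>?Q\<^esub>"
    apply simp apply (rule mk_eq) using oo by simp
  have eq: "R_alg K A Rs = ?Q" by (rule R_alg_char[OF K g])
  show ?thesis unfolding eq good_def using agQ oneQ smQ distQ ooQ by blast
qed




lemma R_ops[simp]:
  "monoid.mult (R_alg K A Rs) = monoid.mult (prod_alg K A Rs)"
  "add (R_alg K A Rs) = add (prod_alg K A Rs)"
  "one (R_alg K A Rs) = one (prod_alg K A Rs)"
  "ring.zero (R_alg K A Rs) = ring.zero (prod_alg K A Rs)"
  "smult (R_alg K A Rs) = smult (prod_alg K A Rs)"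
  by (simp_all add: R_alg_def Let_def)

lemma R_carrier: "field K \<Longrightarrow> (\<And>i. i \<in> A \<Longrightarrow> good K (Rs i)) \<Longrightarrow> carrier (R_alg K A Rs) = Rcar K A Rs"
  by (subst R_alg_char) auto

lemma alg_isoI:
  assumes "\<And>x. x \<in> carrier M \<Longrightarrow> h x \<in> carrier N"
    "\<And>x y. x \<in> carrier M \<Longrightarrow> y \<in> carrier M \<Longrightarrow> h (x \<otimes>\<^bsub>M\<^esub> y) = h x \<otimes>\<^bsub>N\<^esub> h y"
    "\<And>x y. x \<in> carrier M \<Longrightarrow> y \<in> carrier M \<Longrightarrow> h (x \<oplus>\<^bsub>M\<^esub> y) = h x \<oplus>\<^bsub>N\<^esub> h y"
    "h \<one>\<^bsub>M\<^esub> = \<one>\<^bsub>N\<^esub>"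
    "\<And>a x. a \<in> carrier K \<Longrightarrow> x \<in> carrier M \<Longrightarrow> h (a \<odot>\<^bsub>M\<^esub> x) = a \<odot>\<^bsub>N\<^esub> h x"
    "inj_on h (carrier M)"
    "\<And>y. y \<in> carrier N \<Longrightarrow> \<exists>x\<in>carrier M. h x = y"
  shows "h \<in> alg_iso K M N"
proof -
  have "h ` carrier M = carrier N" using assms(1,7) by blast
  then show ?thesis unfolding alg_iso_def ring_iso_def ring_hom_def bij_betw_def
    using assms(1-6) by blast
qed

lemma alg_isoD:
  assumes "h \<in> alg_iso K M N"
  shows "\<And>x. x \<in> carrier M \<Longrightarrow> h x \<in> carrier N"
    "\<And>x y. x \<in> carrier M \<Longrightarrow> y \<in> carrier M \<Longrightarrow> h (x \<otimes>\<^bsub>M\<^esub> y) = h x \<otimes>\<^bsub>N\<^esub> h y"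
    "\<And>x y. x \<in> carrier M \<Longrightarrow> y \<in> carrier M \<Longrightarrow> h (x \<oplus>\<^bsub>M\<^esub> y) = h x \<oplus>\<^bsub>N\<^esub> h y"
    "h \<one>\<^bsub>M\<^esub> = \<one>\<^bsub>N\<^esub>"
    "\<And>a x. a \<in> carrier K \<Longrightarrow> x \<in> carrier M \<Longrightarrow> h (a \<odot>\<^bsub>M\<^esub> x) = a \<odot>\<^bsub>N\<^esub> h x"
    "inj_on h (carrier M)"
    "h ` carrier M = carrier N"
  using assms unfolding alg_iso_def ring_iso_def ring_hom_def bij_betw_def by auto

lemma alg_iso_comp:
  assumes "h \<in> alg_iso K M N" "g \<in> alg_iso K N L"
  shows "(g \<circ> h) \<in> alg_iso K M L"
proof (rule alg_isoI)
  note h = alg_isoD[OF assms(1)] and g = alg_isoD[OF assms(2)]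
  show "\<And>x. x \<in> carrier M \<Longrightarrow> (g \<circ> h) x \<in> carrier L" using h(1) g(1) by simp
  show "\<And>x y. x \<in> carrier M \<Longrightarrow> y \<in> carrier M \<Longrightarrow> (g \<circ> h) (x \<otimes>\<^bsub>M\<^esub> y) = (g \<circ> h) x \<otimes>\<^bsub>L\<^esub> (g \<circ> h) y"
    using h(1,2) g(2) by simp
  show "\<And>x y. x \<in> carrier M \<Longrightarrow> y \<in> carrier M \<Longrightarrow> (g \<circ> h) (x \<oplus>\<^bsub>M\<^esub> y) = (g \<circ> h) x \<oplus>\<^bsub>L\<^esub> (g \<circ> h) y"
    using h(1,3) g(3) by simp
  show "(g \<circ> h) \<one>\<^bsub>M\<^esub> = \<one>\<^bsub>L\<^esub>" using h(4) g(4) by simp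
  show "\<And>a x. a \<in> carrier K \<Longrightarrow> x \<in> carrier M \<Longrightarrow> (g \<circ> h) (a \<odot>\<^bsub>M\<^esub> x) = a \<odot>\<^bsub>L\<^esub> (g \<circ> h) x"
    using h(1,5) g(5) by simp
  show "inj_on (g \<circ> h) (carrier M)" using h(6,7) g(6) comp_inj_on by metis
  show "\<And>y. y \<in> carrier L \<Longrightarrow> \<exists>x\<in>carrier M. (g \<circ> h) x = y" using h(7) g(7)
    by (metis comp_apply imageE)
qed

lemma alg_iso_id: "id \<in> alg_iso K M M"
  by (rule alg_isoI) auto

lemma alg_iso_restrict:
  assumes "h \<in> alg_iso K M N" "C \<subseteq> carrier M" "h ` C = C'"
  shows "h \<in> alg_iso K (M\<lparr>carrier := C\<rparr>) (N\<lparr>carrier := C'\<rparr>)"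
proof (rule alg_isoI)
  note h = alg_isoD[OF assms(1)]
  show "inj_on h (carrier (M\<lparr>carrier := C\<rparr>))" using h(6) assms(2) inj_on_subset by auto
qed (use assms alg_isoD[OF assms(1)] in \<open>auto simp: subset_iff\<close>)

definition isom :: "'k ring \<Rightarrow> 'k alg \<Rightarrow> 'k alg \<Rightarrow> bool" where
  "isom K M N \<longleftrightarrow> (\<exists>h. h \<in> alg_iso K M N) \<and> (\<exists>h. h \<in> alg_iso K N M)"

lemma isom_refl: "isom K M M" unfolding isom_def using alg_iso_id by blast
lemma isom_sym: "isom K M N \<Longrightarrow> isom K N M" unfolding isom_def by blast
lemma isom_trans: "isom K M N \<Longrightarrow> isom K N L \<Longrightarrow> isom K M L"
  unfolding isom_def using alg_iso_comp by blast


lemma prod_map_iso: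
  assumes g: "bij_betw g A A'" and h: "\<And>i. i \<in> A \<Longrightarrow> h i \<in> alg_iso K (Rs i) (Rs' (g i))"
  shows "(\<lambda>x. mk K A' (\<lambda>k. h (the_inv_into A g k) (coord x (the_inv_into A g k))))
           \<in> alg_iso K (prod_alg K A Rs) (prod_alg K A' Rs')"
    (is "?F \<in> _")
proof -
  let ?gi = "the_inv_into A g"
  have inj: "inj_on g A" and img: "g ` A = A'" using g unfolding bij_betw_def by auto
  have gi1[simp]: "\<And>k. k \<in> A' \<Longrightarrow> ?gi k \<in> A" using the_inv_into_into[OF inj] img by blast
  have gi2[simp]: "\<And>k. k \<in> A' \<Longrightarrow> g (?gi k) = k" using f_the_inv_into_f[OF inj] img by blast
  have gi3[simp]: "\<And>i. i \<in> A \<Longrightarrow> ?gi (g i) = i" using the_inv_into_f_f[OF inj] by blast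
  have gA[simp]: "\<And>i. i \<in> A \<Longrightarrow> g i \<in> A'" using img by blast
  have hc: "\<And>k x. k \<in> A' \<Longrightarrow> x \<in> carrier (Rs (?gi k)) \<Longrightarrow> h (?gi k) x \<in> carrier (Rs' k)"
    using alg_isoD(1)[OF h[OF gi1]] by fastforce
  have hm: "\<And>k x y. k \<in> A' \<Longrightarrow> x \<in> carrier (Rs (?gi k)) \<Longrightarrow> y \<in> carrier (Rs (?gi k)) \<Longrightarrow>
     h (?gi k) (x \<otimes>\<^bsub>Rs (?gi k)\<^esub> y) = h (?gi k) x \<otimes>\<^bsub>Rs' k\<^esub> h (?gi k) y"
    using alg_isoD(2)[OF h[OF gi1]] by fastforce
  have ha: "\<And>k x y. k \<in> A' \<Longrightarrow> x \<in> carrier (Rs (?gi k)) \<Longrightarrow> y \<in> carrier (Rs (?gi k)) \<Longrightarrow>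
     h (?gi k) (x \<oplus>\<^bsub>Rs (?gi k)\<^esub> y) = h (?gi k) x \<oplus>\<^bsub>Rs' k\<^esub> h (?gi k) y"
    using alg_isoD(3)[OF h[OF gi1]] by fastforce
  have h1: "\<And>k. k \<in> A' \<Longrightarrow> h (?gi k) \<one>\<^bsub>Rs (?gi k)\<^esub> = \<one>\<^bsub>Rs' k\<^esub>"
    using alg_isoD(4)[OF h[OF gi1]] by fastforce
  have hs: "\<And>k a x. k \<in> A' \<Longrightarrow> a \<in> carrier K \<Longrightarrow> x \<in> carrier (Rs (?gi k)) \<Longrightarrow>
     h (?gi k) (a \<odot>\<^bsub>Rs (?gi k)\<^esub> x) = a \<odot>\<^bsub>Rs' k\<^esub> h (?gi k) x"
    using alg_isoD(5)[OF h[OF gi1]] by fastforce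
  show ?thesis
  proof (rule alg_isoI)
    fix x assume x: "x \<in> carrier (prod_alg K A Rs)"
    show "?F x \<in> carrier (prod_alg K A' Rs')"
      unfolding mk_in_prod using hc coord_in[OF x] gi1 by blast
  next
    fix x y assume x: "x \<in> carrier (prod_alg K A Rs)" and y: "y \<in> carrier (prod_alg K A Rs)"
    show "?F (x \<otimes>\<^bsub>prod_alg K A Rs\<^esub> y) = ?F x \<otimes>\<^bsub>prod_alg K A' Rs'\<^esub> ?F y"
      using hm coord_in[OF x] coord_in[OF y] by simp
    show "?F (x \<oplus>\<^bsub>prod_alg K A Rs\<^esub> y) = ?F x \<oplus>\<^bsub>prod_alg K A' Rs'\<^esub> ?F y"
      using ha coord_in[OF x] coord_in[OF y] by simp
  next
    show "?F \<one>\<^bsub>prod_alg K A Rs\<^esub> = \<one>\<^bsub>prod_alg K A' Rs'\<^esub>" using h1 by simp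
  next
    fix a x assume a: "a \<in> carrier K" and x: "x \<in> carrier (prod_alg K A Rs)"
    show "?F (a \<odot>\<^bsub>prod_alg K A Rs\<^esub> x) = a \<odot>\<^bsub>prod_alg K A' Rs'\<^esub> ?F x"
      using hs[OF _ a] coord_in[OF x] by simp
  next
    show "inj_on ?F (carrier (prod_alg K A Rs))"
    proof (rule inj_onI)
      fix x y assume x: "x \<in> carrier (prod_alg K A Rs)" and y: "y \<in> carrier (prod_alg K A Rs)"
        and eq: "?F x = ?F y"
      show "x = y"
      proof (rule prod_eq[OF x y])
        fix i assume i: "i \<in> A"
        have "coord (?F x) (g i) = coord (?F y) (g i)" using eq by simp
        then have "h i (coord x i) = h i (coord y i)" using i by simp
        then show "coord x i = coord y i"
          using alg_isoD(6)[OF h[OF i]] coord_in[OF x i] coord_in[OF y i] inj_onD by metis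
      qed
    qed
  next
    fix y assume y: "y \<in> carrier (prod_alg K A' Rs')"
    define x where "x = mk K A (\<lambda>i. inv_into (carrier (Rs i)) (h i) (coord y (g i)))"
    have yc: "\<And>i. i \<in> A \<Longrightarrow> coord y (g i) \<in> h i ` carrier (Rs i)"
      using alg_isoD(7)[OF h] coord_in[OF y] gA by metis
    have "x \<in> carrier (prod_alg K A Rs)" unfolding x_def mk_in_prod
      using yc inv_into_into by metis
    moreover have "?F x = y"
    proof (rule prod_eq[where Rs=Rs' and Rs'=Rs', OF _ y])
      show "?F x \<in> carrier (prod_alg K A' Rs')" unfolding mk_in_prod
        using hc calculation coord_in gi1 by blast
      fix k assume k: "k \<in> A'"
      have "coord y k \<in> h (?gi k) ` carrier (Rs (?gi k))" using yc[OF gi1[OF k]] gi2[OF k] by simp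
      then show "coord (?F x) k = coord y k" using k unfolding x_def by (simp add: f_inv_into_f)
    qed
    ultimately show "\<exists>x\<in>carrier (prod_alg K A Rs). ?F x = y" by blast
  qed
qed


lemma R_map_iso:
  assumes K: "field K" and g: "bij_betw g A A'" and h: "\<And>i. i \<in> A \<Longrightarrow> h i \<in> alg_iso K (Rs i) (Rs' (g i))"
    and gd: "\<And>i. i \<in> A \<Longrightarrow> good K (Rs i)" and gd': "\<And>k. k \<in> A' \<Longrightarrow> good K (Rs' k)"
  shows "(\<lambda>x. mk K A' (\<lambda>k. h (the_inv_into A g k) (coord x (the_inv_into A g k))))
           \<in> alg_iso K (R_alg K A Rs) (R_alg K A' Rs')"
    (is "?F \<in> _")
proof -
  let ?gi = "the_inv_into A g"
  have inj: "inj_on g A" and img: "g ` A = A'" using g unfolding bij_betw_def by auto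
  have gi1[simp]: "\<And>k. k \<in> A' \<Longrightarrow> ?gi k \<in> A" using the_inv_into_into[OF inj] img by blast
  have gi2[simp]: "\<And>k. k \<in> A' \<Longrightarrow> g (?gi k) = k" using f_the_inv_into_f[OF inj] img by blast
  have gi3[simp]: "\<And>i. i \<in> A \<Longrightarrow> ?gi (g i) = i" using the_inv_into_f_f[OF inj] by blast
  have gA[simp]: "\<And>i. i \<in> A \<Longrightarrow> g i \<in> A'" using img by blast
  note P = prod_map_iso[where g=g and A=A and A'=A' and h=h and Rs=Rs and Rs'=Rs' and K=K, OF g h]
  have one: "\<And>i. i \<in> A \<Longrightarrow> \<one>\<^bsub>Rs i\<^esub> \<in> carrier (Rs i)" using gd unfolding good_def by blast
  have hc1: "\<And>i c. i \<in> A \<Longrightarrow> c \<in> carrier K \<Longrightarrow> h i (c \<odot>\<^bsub>Rs i\<^esub> \<one>\<^bsub>Rs i\<^esub>) = c \<odot>\<^bsub>Rs' (g i)\<^esub> \<one>\<^bsub>Rs' (g i)\<^esub>"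
  proof -
    fix i c assume i: "i \<in> A" and c: "c \<in> carrier K"
    have "h i (c \<odot>\<^bsub>Rs i\<^esub> \<one>\<^bsub>Rs i\<^esub>) = c \<odot>\<^bsub>Rs' (g i)\<^esub> h i \<one>\<^bsub>Rs i\<^esub>"
      by (rule alg_isoD(5)[OF h[OF i] c one[OF i]])
    then show "h i (c \<odot>\<^bsub>Rs i\<^esub> \<one>\<^bsub>Rs i\<^esub>) = c \<odot>\<^bsub>Rs' (g i)\<^esub> \<one>\<^bsub>Rs' (g i)\<^esub>"
      using alg_isoD(4)[OF h[OF i]] by simp
  qed
  have sm: "\<And>i c. i \<in> A \<Longrightarrow> c \<in> carrier K \<Longrightarrow> c \<odot>\<^bsub>Rs i\<^esub> \<one>\<^bsub>Rs i\<^esub> \<in> carrier (Rs i)"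
    using gd unfolding good_def by blast
  have "?F ` Rcar K A Rs = Rcar K A' Rs'"
  proof (intro equalityI subsetI)
    fix y assume "y \<in> ?F ` Rcar K A Rs"
    then obtain x where x: "x \<in> Rcar K A Rs" and y: "y = ?F x" by blast
    from x obtain c where xP: "x \<in> carrier (prod_alg K A Rs)" and c: "c \<in> carrier K"
      and fx: "finite {i\<in>A. coord x i \<noteq> c \<odot>\<^bsub>Rs i\<^esub> \<one>\<^bsub>Rs i\<^esub>}" by (auto elim: RcarE)
    have yP: "y \<in> carrier (prod_alg K A' Rs')" unfolding y by (rule alg_isoD(1)[OF P xP])
    have "{k\<in>A'. coord y k \<noteq> c \<odot>\<^bsub>Rs' k\<^esub> \<one>\<^bsub>Rs' k\<^esub>} \<subseteq> g ` {i\<in>A. coord x i \<noteq> c \<odot>\<^bsub>Rs i\<^esub> \<one>\<^bsub>Rs i\<^esub>}"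
    proof
      fix k assume "k \<in> {k\<in>A'. coord y k \<noteq> c \<odot>\<^bsub>Rs' k\<^esub> \<one>\<^bsub>Rs' k\<^esub>}"
      then have k: "k \<in> A'" and ne: "coord y k \<noteq> c \<odot>\<^bsub>Rs' k\<^esub> \<one>\<^bsub>Rs' k\<^esub>" by auto
      have "coord x (?gi k) \<noteq> c \<odot>\<^bsub>Rs (?gi k)\<^esub> \<one>\<^bsub>Rs (?gi k)\<^esub>"
      proof
        assume "coord x (?gi k) = c \<odot>\<^bsub>Rs (?gi k)\<^esub> \<one>\<^bsub>Rs (?gi k)\<^esub>"
        then have "coord y k = c \<odot>\<^bsub>Rs' k\<^esub> \<one>\<^bsub>Rs' k\<^esub>" using y k hc1[OF gi1[OF k] c] by simp
        then show False using ne by simp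
      qed
      show "k \<in> g ` {i\<in>A. coord x i \<noteq> c \<odot>\<^bsub>Rs i\<^esub> \<one>\<^bsub>Rs i\<^esub>}"
      proof (rule image_eqI[where x="?gi k"])
        show "k = g (?gi k)" using k by simp
        show "?gi k \<in> {i\<in>A. coord x i \<noteq> c \<odot>\<^bsub>Rs i\<^esub> \<one>\<^bsub>Rs i\<^esub>}"
          using k \<open>coord x (?gi k) \<noteq> c \<odot>\<^bsub>Rs (?gi k)\<^esub> \<one>\<^bsub>Rs (?gi k)\<^esub>\<close> by simp
      qed
    qed
    then have "finite {k\<in>A'. coord y k \<noteq> c \<odot>\<^bsub>Rs' k\<^esub> \<one>\<^bsub>Rs' k\<^esub>}"
      using fx finite_subset by blast
    then show "y \<in> Rcar K A' Rs'" using RcarI[OF yP c] by blast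
  next
    fix y assume y: "y \<in> Rcar K A' Rs'"
    from y obtain d where yP: "y \<in> carrier (prod_alg K A' Rs')" and d: "d \<in> carrier K"
      and fy: "finite {k\<in>A'. coord y k \<noteq> d \<odot>\<^bsub>Rs' k\<^esub> \<one>\<^bsub>Rs' k\<^esub>}" by (auto elim: RcarE)
    have "y \<in> ?F ` carrier (prod_alg K A Rs)" by (subst alg_isoD(7)[OF P]) (simp_all add: yP)
    then obtain x where yx: "y = ?F x" and xP: "x \<in> carrier (prod_alg K A Rs)"
      by (rule imageE)
    have "{i\<in>A. coord x i \<noteq> d \<odot>\<^bsub>Rs i\<^esub> \<one>\<^bsub>Rs i\<^esub>} \<subseteq> ?gi ` {k\<in>A'. coord y k \<noteq> d \<odot>\<^bsub>Rs' k\<^esub> \<one>\<^bsub>Rs' k\<^esub>}"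
    proof
      fix i assume "i \<in> {i\<in>A. coord x i \<noteq> d \<odot>\<^bsub>Rs i\<^esub> \<one>\<^bsub>Rs i\<^esub>}"
      then have i: "i \<in> A" and ne: "coord x i \<noteq> d \<odot>\<^bsub>Rs i\<^esub> \<one>\<^bsub>Rs i\<^esub>" by auto
      have "coord y (g i) \<noteq> d \<odot>\<^bsub>Rs' (g i)\<^esub> \<one>\<^bsub>Rs' (g i)\<^esub>"
      proof
        assume "coord y (g i) = d \<odot>\<^bsub>Rs' (g i)\<^esub> \<one>\<^bsub>Rs' (g i)\<^esub>"
        then have "h i (coord x i) = h i (d \<odot>\<^bsub>Rs i\<^esub> \<one>\<^bsub>Rs i\<^esub>)" using yx i hc1[OF i d] by simp
        then have "coord x i = d \<odot>\<^bsub>Rs i\<^esub> \<one>\<^bsub>Rs i\<^esub>"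
          by (rule inj_onD[OF alg_isoD(6)[OF h[OF i]] _ coord_in[OF xP i] sm[OF i d]])
        then show False using ne by simp
      qed
      show "i \<in> ?gi ` {k\<in>A'. coord y k \<noteq> d \<odot>\<^bsub>Rs' k\<^esub> \<one>\<^bsub>Rs' k\<^esub>}"
      proof (rule image_eqI[where x="g i"])
        show "i = ?gi (g i)" using i by simp
        show "g i \<in> {k\<in>A'. coord y k \<noteq> d \<odot>\<^bsub>Rs' k\<^esub> \<one>\<^bsub>Rs' k\<^esub>}"
          using i \<open>coord y (g i) \<noteq> d \<odot>\<^bsub>Rs' (g i)\<^esub> \<one>\<^bsub>Rs' (g i)\<^esub>\<close> by simp
      qed
    qed
    then have "finite {i\<in>A. coord x i \<noteq> d \<odot>\<^bsub>Rs i\<^esub> \<one>\<^bsub>Rs i\<^esub>}"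
      using fy finite_subset by blast
    then have "x \<in> Rcar K A Rs" using RcarI[OF xP d] by blast
    then show "y \<in> ?F ` Rcar K A Rs" using yx by blast
  qed
  moreover have "Rcar K A Rs \<subseteq> carrier (prod_alg K A Rs)" using Rcar_sub by blast
  ultimately have "?F \<in> alg_iso K ((prod_alg K A Rs)\<lparr>carrier := Rcar K A Rs\<rparr>) ((prod_alg K A' Rs')\<lparr>carrier := Rcar K A' Rs'\<rparr>)"
    using alg_iso_restrict[OF P] by blast
  moreover have e1: "R_alg K A Rs = (prod_alg K A Rs)\<lparr>carrier := Rcar K A Rs\<rparr>" by (rule R_alg_char[OF K gd])
  moreover have e2: "R_alg K A' Rs' = (prod_alg K A' Rs')\<lparr>carrier := Rcar K A' Rs'\<rparr>" by (rule R_alg_char[OF K gd'])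
  ultimately show ?thesis by simp
qed

lemma R_cong:
  assumes K: "field K" and g: "bij_betw g A A'" and h: "\<And>i. i \<in> A \<Longrightarrow> isom K (Rs i) (Rs' (g i))"
    and gd: "\<And>i. i \<in> A \<Longrightarrow> good K (Rs i)" and gd': "\<And>k. k \<in> A' \<Longrightarrow> good K (Rs' k)"
  shows "isom K (R_alg K A Rs) (R_alg K A' Rs')"
proof -
  have "\<forall>i\<in>A. \<exists>f. f \<in> alg_iso K (Rs i) (Rs' (g i))" using h unfolding isom_def by blast
  then obtain f where f: "\<And>i. i \<in> A \<Longrightarrow> f i \<in> alg_iso K (Rs i) (Rs' (g i))" by metis
  let ?gi = "the_inv_into A g"
  have g': "bij_betw ?gi A' A" using g by (rule bij_betw_the_inv_into)
  have inj: "inj_on g A" and img: "g ` A = A'" using g unfolding bij_betw_def by auto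
  have "\<forall>k\<in>A'. \<exists>f. f \<in> alg_iso K (Rs' k) (Rs (?gi k))"
  proof
    fix k assume k: "k \<in> A'"
    have "?gi k \<in> A" "g (?gi k) = k" using the_inv_into_into[OF inj] f_the_inv_into_f[OF inj] img k by auto
    then show "\<exists>f. f \<in> alg_iso K (Rs' k) (Rs (?gi k))" using h unfolding isom_def by metis
  qed
  then obtain f' where f': "\<And>k. k \<in> A' \<Longrightarrow> f' k \<in> alg_iso K (Rs' k) (Rs (?gi k))" by metis
  show ?thesis unfolding isom_def
    using R_map_iso[where g=g and A=A and A'=A' and h=f and Rs=Rs and Rs'=Rs' and K=K, OF K g f gd gd']
      R_map_iso[where g="?gi" and A=A' and A'=A and h=f' and Rs=Rs' and Rs'=Rs and K=K, OF K g' f' gd' gd] by blast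
qed

definition pr :: "'k ring \<Rightarrow> 'k bt \<Rightarrow> 'k bt \<Rightarrow> 'k bt" where
  "pr K a b = mk K {0,1} (\<lambda>i. if i = 0 then a else b)"

lemma pr_coord[simp]: "coord (pr K a b) 0 = a" "coord (pr K a b) (Suc 0) = b"
  unfolding pr_def by simp_all

lemma pr_inj[simp]: "pr K a b = pr K c d \<longleftrightarrow> a = c \<and> b = d"
  by (metis pr_coord)

lemma D_carrier: "x \<in> carrier (ring_dprod K M N) \<longleftrightarrow> (\<exists>a b. x = pr K a b \<and> a \<in> carrier M \<and> b \<in> carrier N)"
proof
  assume x: "x \<in> carrier (ring_dprod K M N)"
  then have x': "x \<in> carrier (prod_alg K {0,1} (\<lambda>i. if i = 0 then M else N))"
    unfolding ring_dprod_def .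
  have c0: "coord x 0 \<in> carrier M" using coord_in[OF x', of 0] by simp
  have c1: "coord x 1 \<in> carrier N" using coord_in[OF x', of 1] by simp
  have "pr K (coord x 0) (coord x 1) \<in> carrier (prod_alg K {0,1} (\<lambda>i. if i = 0 then M else N))"
    unfolding pr_def mk_in_prod using c0 c1 by simp
  then have "x = pr K (coord x 0) (coord x 1)"
  proof (rule prod_eq[OF x'])
    fix i :: nat assume "i \<in> {0,1}"
    then show "coord x i = coord (pr K (coord x 0) (coord x 1)) i" unfolding pr_def by auto
  qed
  then show "\<exists>a b. x = pr K a b \<and> a \<in> carrier M \<and> b \<in> carrier N" using c0 c1 by blast
next
  assume "\<exists>a b. x = pr K a b \<and> a \<in> carrier M \<and> b \<in> carrier N"
  then obtain a b where "x = pr K a b" "a \<in> carrier M" "b \<in> carrier N" by blast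
  then show "x \<in> carrier (ring_dprod K M N)" unfolding ring_dprod_def pr_def mk_in_prod by simp
qed

lemma pr_in_D[simp]: "pr K a b \<in> carrier (ring_dprod K M N) \<longleftrightarrow> a \<in> carrier M \<and> b \<in> carrier N"
  unfolding D_carrier by simp

lemma D_ops[simp]:
  "monoid.mult (ring_dprod K M N) (pr K a b) (pr K c d) = pr K (a \<otimes>\<^bsub>M\<^esub> c) (b \<otimes>\<^bsub>N\<^esub> d)"
  "add (ring_dprod K M N) (pr K a b) (pr K c d) = pr K (a \<oplus>\<^bsub>M\<^esub> c) (b \<oplus>\<^bsub>N\<^esub> d)"
  "one (ring_dprod K M N) = pr K \<one>\<^bsub>M\<^esub> \<one>\<^bsub>N\<^esub>"
  "smult (ring_dprod K M N) t (pr K a b) = pr K (t \<odot>\<^bsub>M\<^esub> a) (t \<odot>\<^bsub>N\<^esub> b)"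
  unfolding ring_dprod_def pr_def by (auto intro!: mk_eq)




lemma pr_coord1[simp]: "coord (pr K a b) 1 = b"
  using pr_coord(2) by simp

lemma D_elem: assumes "z \<in> carrier (ring_dprod K M N)"
  obtains a b where "z = pr K a b" "a \<in> carrier M" "b \<in> carrier N"
  using assms unfolding D_carrier by blast

lemma D_map_iso:
  assumes h1: "h1 \<in> alg_iso K M M'" and h2: "h2 \<in> alg_iso K N N'"
  shows "(\<lambda>z. pr K (h1 (coord z 0)) (h2 (coord z 1))) \<in> alg_iso K (ring_dprod K M N) (ring_dprod K M' N')"
    (is "?F \<in> _")
proof (rule alg_isoI)
  note a = alg_isoD[OF h1] and b = alg_isoD[OF h2]
  fix x assume "x \<in> carrier (ring_dprod K M N)"
  then obtain p q where "x = pr K p q" "p \<in> carrier M" "q \<in> carrier N" by (rule D_elem)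
  then show "?F x \<in> carrier (ring_dprod K M' N')" using a(1) b(1) by simp
next
  note a = alg_isoD[OF h1] and b = alg_isoD[OF h2]
  fix x y assume x: "x \<in> carrier (ring_dprod K M N)" and y: "y \<in> carrier (ring_dprod K M N)"
  obtain p q where "x = pr K p q" "p \<in> carrier M" "q \<in> carrier N" using x by (rule D_elem)
  moreover obtain p' q' where "y = pr K p' q'" "p' \<in> carrier M" "q' \<in> carrier N" using y by (rule D_elem)
  ultimately show "?F (x \<otimes>\<^bsub>ring_dprod K M N\<^esub> y) = ?F x \<otimes>\<^bsub>ring_dprod K M' N'\<^esub> ?F y"
    "?F (x \<oplus>\<^bsub>ring_dprod K M N\<^esub> y) = ?F x \<oplus>\<^bsub>ring_dprod K M' N'\<^esub> ?F y"
    using a(2,3) b(2,3) by simp_all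
next
  note a = alg_isoD[OF h1] and b = alg_isoD[OF h2]
  show "?F \<one>\<^bsub>ring_dprod K M N\<^esub> = \<one>\<^bsub>ring_dprod K M' N'\<^esub>" using a(4) b(4) by simp
next
  note a = alg_isoD[OF h1] and b = alg_isoD[OF h2]
  fix t x assume t: "t \<in> carrier K" and x: "x \<in> carrier (ring_dprod K M N)"
  obtain p q where "x = pr K p q" "p \<in> carrier M" "q \<in> carrier N" using x by (rule D_elem)
  then show "?F (t \<odot>\<^bsub>ring_dprod K M N\<^esub> x) = t \<odot>\<^bsub>ring_dprod K M' N'\<^esub> ?F x"
    using a(5) b(5) t by simp
next
  note a = alg_isoD[OF h1] and b = alg_isoD[OF h2]
  show "inj_on ?F (carrier (ring_dprod K M N))"
  proof (rule inj_onI)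
    fix x y assume x: "x \<in> carrier (ring_dprod K M N)" and y: "y \<in> carrier (ring_dprod K M N)" and e: "?F x = ?F y"
    obtain p q where 1: "x = pr K p q" "p \<in> carrier M" "q \<in> carrier N" using x by (rule D_elem)
    obtain p' q' where 2: "y = pr K p' q'" "p' \<in> carrier M" "q' \<in> carrier N" using y by (rule D_elem)
    have "h1 p = h1 p'" "h2 q = h2 q'" using e 1 2 by simp_all
    then have "p = p'" "q = q'" using inj_onD[OF a(6)] inj_onD[OF b(6)] 1 2 by blast+
    then show "x = y" using 1 2 by simp
  qed
next
  note a = alg_isoD[OF h1] and b = alg_isoD[OF h2]
  fix y assume "y \<in> carrier (ring_dprod K M' N')"
  then obtain p q where y: "y = pr K p q" "p \<in> carrier M'" "q \<in> carrier N'" by (rule D_elem)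
  have "p \<in> h1 ` carrier M" "q \<in> h2 ` carrier N" using y a(7) b(7) by simp_all
  then obtain p0 q0 where "p0 \<in> carrier M" "h1 p0 = p" "q0 \<in> carrier N" "h2 q0 = q"
    by blast
  then show "\<exists>x\<in>carrier (ring_dprod K M N). ?F x = y"
    using y by (intro bexI[of _ "pr K p0 q0"]) simp_all
qed

lemma D_cong: "isom K M M' \<Longrightarrow> isom K N N' \<Longrightarrow> isom K (ring_dprod K M N) (ring_dprod K M' N')"
  unfolding isom_def using D_map_iso by blast

lemma D_assoc: "isom K (ring_dprod K (ring_dprod K M N) L) (ring_dprod K M (ring_dprod K N L))"
proof -
  let ?A = "ring_dprod K (ring_dprod K M N) L" and ?B = "ring_dprod K M (ring_dprod K N L)"
  let ?F = "\<lambda>z. pr K (coord (coord z 0) 0) (pr K (coord (coord z 0) 1) (coord z 1))"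
  let ?G = "\<lambda>z. pr K (pr K (coord z 0) (coord (coord z 1) 0)) (coord (coord z 1) 1)"
  have A: "\<And>z. z \<in> carrier ?A \<longleftrightarrow> (\<exists>a b c. z = pr K (pr K a b) c \<and> a \<in> carrier M \<and> b \<in> carrier N \<and> c \<in> carrier L)"
    unfolding D_carrier by auto
  have B: "\<And>z. z \<in> carrier ?B \<longleftrightarrow> (\<exists>a b c. z = pr K a (pr K b c) \<and> a \<in> carrier M \<and> b \<in> carrier N \<and> c \<in> carrier L)"
    unfolding D_carrier by auto
  have "?F \<in> alg_iso K ?A ?B"
  proof (rule alg_isoI)
    show "inj_on ?F (carrier ?A)" by (rule inj_onI) (auto simp: A)
    fix y assume "y \<in> carrier ?B"
    then obtain a b c where "y = pr K a (pr K b c)" "a \<in> carrier M" "b \<in> carrier N" "c \<in> carrier L"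
      unfolding B by blast
    then show "\<exists>x\<in>carrier ?A. ?F x = y" by (intro bexI[of _ "pr K (pr K a b) c"]) (simp_all add: A)
  qed (auto simp: A B)
  moreover have "?G \<in> alg_iso K ?B ?A"
  proof (rule alg_isoI)
    show "inj_on ?G (carrier ?B)" by (rule inj_onI) (auto simp: B)
    fix y assume "y \<in> carrier ?A"
    then obtain a b c where "y = pr K (pr K a b) c" "a \<in> carrier M" "b \<in> carrier N" "c \<in> carrier L"
      unfolding A by blast
    then show "\<exists>x\<in>carrier ?B. ?G x = y" by (intro bexI[of _ "pr K a (pr K b c)"]) (simp_all add: B)
  qed (auto simp: A B)
  ultimately show ?thesis unfolding isom_def by blast
qed


lemma split_iso:
  assumes K: "field K" and gd: "\<And>i. i \<in> A \<Longrightarrow> good K (Rs i)" and j: "j \<in> A"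
  shows "isom K (R_alg K A Rs) (ring_dprod K (Rs j) (R_alg K (A - {j}) Rs))"
proof -
  let ?R = "R_alg K A Rs" and ?S = "R_alg K (A - {j}) Rs"
  let ?D = "ring_dprod K (Rs j) ?S"
  let ?F = "\<lambda>x. pr K (coord x j) (mk K (A - {j}) (coord x))"
  let ?G = "\<lambda>z. mk K A (\<lambda>i. if i = j then coord z 0 else coord (coord z 1) i)"
  have cR: "carrier ?R = Rcar K A Rs" by (rule R_carrier[OF K gd])
  have cS: "carrier ?S = Rcar K (A - {j}) Rs" by (rule R_carrier[OF K]) (use gd in blast)
  have Fc: "\<And>x. x \<in> Rcar K A Rs \<Longrightarrow> ?F x \<in> carrier ?D"
  proof -
    fix x assume x: "x \<in> Rcar K A Rs"
    then obtain c where xP: "x \<in> carrier (prod_alg K A Rs)" and c: "c \<in> carrier K"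
      and fx: "finite {i\<in>A. coord x i \<noteq> c \<odot>\<^bsub>Rs i\<^esub> \<one>\<^bsub>Rs i\<^esub>}" by (rule RcarE)
    have m1: "mk K (A - {j}) (coord x) \<in> carrier (prod_alg K (A - {j}) Rs)"
      unfolding mk_in_prod using coord_in[OF xP] by blast
    have "{i\<in>A - {j}. coord (mk K (A - {j}) (coord x)) i \<noteq> c \<odot>\<^bsub>Rs i\<^esub> \<one>\<^bsub>Rs i\<^esub>}
        \<subseteq> {i\<in>A. coord x i \<noteq> c \<odot>\<^bsub>Rs i\<^esub> \<one>\<^bsub>Rs i\<^esub>}" by auto
    then have "finite {i\<in>A - {j}. coord (mk K (A - {j}) (coord x)) i \<noteq> c \<odot>\<^bsub>Rs i\<^esub> \<one>\<^bsub>Rs i\<^esub>}"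
      using fx finite_subset by blast
    then have "mk K (A - {j}) (coord x) \<in> Rcar K (A - {j}) Rs" by (rule RcarI[OF m1 c])
    then show "?F x \<in> carrier ?D" using cS coord_in[OF xP j] by simp
  qed
  have Gc: "\<And>a b. a \<in> carrier (Rs j) \<Longrightarrow> b \<in> Rcar K (A - {j}) Rs \<Longrightarrow> ?G (pr K a b) \<in> Rcar K A Rs"
  proof -
    fix a b assume a: "a \<in> carrier (Rs j)" and b: "b \<in> Rcar K (A - {j}) Rs"
    then obtain d where bP: "b \<in> carrier (prod_alg K (A - {j}) Rs)" and d: "d \<in> carrier K"
      and fb: "finite {i\<in>A - {j}. coord b i \<noteq> d \<odot>\<^bsub>Rs i\<^esub> \<one>\<^bsub>Rs i\<^esub>}" by (elim RcarE)
    have m1: "?G (pr K a b) \<in> carrier (prod_alg K A Rs)"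
      unfolding mk_in_prod using coord_in[OF bP] a by simp
    have "{i\<in>A. coord (?G (pr K a b)) i \<noteq> d \<odot>\<^bsub>Rs i\<^esub> \<one>\<^bsub>Rs i\<^esub>}
        \<subseteq> insert j {i\<in>A - {j}. coord b i \<noteq> d \<odot>\<^bsub>Rs i\<^esub> \<one>\<^bsub>Rs i\<^esub>}" by auto
    then have "finite {i\<in>A. coord (?G (pr K a b)) i \<noteq> d \<odot>\<^bsub>Rs i\<^esub> \<one>\<^bsub>Rs i\<^esub>}"
      using fb finite_subset by blast
    then show "?G (pr K a b) \<in> Rcar K A Rs" by (rule RcarI[OF m1 d])
  qed
  have GF: "\<And>x. x \<in> Rcar K A Rs \<Longrightarrow> ?G (?F x) = x"
  proof -
    fix x assume x: "x \<in> Rcar K A Rs"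
    then have xP: "x \<in> carrier (prod_alg K A Rs)" by (rule Rcar_sub)
    have "?G (?F x) = mk K A (coord x)" by (rule mk_eq) simp
    then show "?G (?F x) = x" using prod_mk_coord[OF xP] by simp
  qed
  have FG: "\<And>a b. a \<in> carrier (Rs j) \<Longrightarrow> b \<in> Rcar K (A - {j}) Rs \<Longrightarrow> ?F (?G (pr K a b)) = pr K a b"
  proof -
    fix a b assume a: "a \<in> carrier (Rs j)" and b: "b \<in> Rcar K (A - {j}) Rs"
    then have bP: "b \<in> carrier (prod_alg K (A - {j}) Rs)" by (intro Rcar_sub)
    have "mk K (A - {j}) (coord (?G (pr K a b))) = mk K (A - {j}) (coord b)" by (rule mk_eq) simp
    then show "?F (?G (pr K a b)) = pr K a b" using prod_mk_coord[OF bP] j by simp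
  qed
  have "?F \<in> alg_iso K ?R ?D"
  proof (rule alg_isoI)
    fix x assume "x \<in> carrier ?R" then show "?F x \<in> carrier ?D" using Fc cR by simp
  next
    fix x y assume "x \<in> carrier ?R" "y \<in> carrier ?R"
    show "?F (x \<otimes>\<^bsub>?R\<^esub> y) = ?F x \<otimes>\<^bsub>?D\<^esub> ?F y" using j by simp
    show "?F (x \<oplus>\<^bsub>?R\<^esub> y) = ?F x \<oplus>\<^bsub>?D\<^esub> ?F y" using j by simp
  next
    show "?F \<one>\<^bsub>?R\<^esub> = \<one>\<^bsub>?D\<^esub>" using j by simp
  next
    fix t x assume "t \<in> carrier K" "x \<in> carrier ?R"
    show "?F (t \<odot>\<^bsub>?R\<^esub> x) = t \<odot>\<^bsub>?D\<^esub> ?F x" using j by simp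
  next
    show "inj_on ?F (carrier ?R)"
    proof (rule inj_onI)
      fix x y assume x: "x \<in> carrier ?R" and y: "y \<in> carrier ?R" and e: "?F x = ?F y"
      have x1: "x \<in> Rcar K A Rs" and y1: "y \<in> Rcar K A Rs" using x y cR by simp_all
      have "x = ?G (?F x)" by (rule GF[OF x1, symmetric])
      also have "\<dots> = ?G (?F y)" using e by (rule arg_cong)
      also have "\<dots> = y" by (rule GF[OF y1])
      finally show "x = y" .
    qed
  next
    fix z assume "z \<in> carrier ?D"
    then obtain a b where z: "z = pr K a b" and a: "a \<in> carrier (Rs j)" and b: "b \<in> carrier ?S"
      by (rule D_elem)
    have b': "b \<in> Rcar K (A - {j}) Rs" using b cS by simp
    show "\<exists>x\<in>carrier ?R. ?F x = z"
    proof (rule bexI[of _ "?G (pr K a b)"])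
      show "?F (?G (pr K a b)) = z" unfolding z by (rule FG[OF a b'])
      show "?G (pr K a b) \<in> carrier ?R" unfolding cR by (rule Gc[OF a b'])
    qed
  qed
  moreover have "?G \<in> alg_iso K ?D ?R"
  proof (rule alg_isoI)
    fix z assume "z \<in> carrier ?D"
    then obtain a b where z: "z = pr K a b" and a: "a \<in> carrier (Rs j)" and b: "b \<in> carrier ?S"
      by (rule D_elem)
    have b': "b \<in> Rcar K (A - {j}) Rs" using b cS by simp
    show "?G z \<in> carrier ?R" unfolding cR z by (rule Gc[OF a b'])
  next
    fix z w assume z0: "z \<in> carrier ?D" and w0: "w \<in> carrier ?D"
    obtain a b where z: "z = pr K a b" "a \<in> carrier (Rs j)" "b \<in> carrier ?S" using z0 by (rule D_elem)
    obtain a' b' where w: "w = pr K a' b'" "a' \<in> carrier (Rs j)" "b' \<in> carrier ?S" using w0 by (rule D_elem)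
    show "?G (z \<otimes>\<^bsub>?D\<^esub> w) = ?G z \<otimes>\<^bsub>?R\<^esub> ?G w" unfolding z w by (simp, rule mk_eq, simp)
    show "?G (z \<oplus>\<^bsub>?D\<^esub> w) = ?G z \<oplus>\<^bsub>?R\<^esub> ?G w" unfolding z w by (simp, rule mk_eq, simp)
  next
    show "?G \<one>\<^bsub>?D\<^esub> = \<one>\<^bsub>?R\<^esub>" by (simp, rule mk_eq, simp)
  next
    fix t z assume t: "t \<in> carrier K" and z0: "z \<in> carrier ?D"
    obtain a b where z: "z = pr K a b" "a \<in> carrier (Rs j)" "b \<in> carrier ?S" using z0 by (rule D_elem)
    show "?G (t \<odot>\<^bsub>?D\<^esub> z) = t \<odot>\<^bsub>?R\<^esub> ?G z" unfolding z by (simp, rule mk_eq, simp)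
  next
    show "inj_on ?G (carrier ?D)"
    proof (rule inj_onI)
      fix z w assume z0: "z \<in> carrier ?D" and w0: "w \<in> carrier ?D" and e: "?G z = ?G w"
      obtain a b where z: "z = pr K a b" "a \<in> carrier (Rs j)" "b \<in> carrier ?S" using z0 by (rule D_elem)
      obtain a' b' where w: "w = pr K a' b'" "a' \<in> carrier (Rs j)" "b' \<in> carrier ?S" using w0 by (rule D_elem)
      have b1: "b \<in> Rcar K (A - {j}) Rs" and b2: "b' \<in> Rcar K (A - {j}) Rs" using z w cS by simp_all
      have "z = ?F (?G z)" unfolding z(1) by (rule FG[OF z(2) b1, symmetric])
      also have "\<dots> = ?F (?G w)" using e by (rule arg_cong)
      also have "\<dots> = w" unfolding w(1) by (rule FG[OF w(2) b2])
      finally show "z = w" .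
    qed
  next
    fix x assume x: "x \<in> carrier ?R"
    have x': "x \<in> Rcar K A Rs" using x cR by simp
    show "\<exists>z\<in>carrier ?D. ?G z = x"
    proof (rule bexI[of _ "?F x"])
      show "?G (?F x) = x" by (rule GF[OF x'])
      show "?F x \<in> carrier ?D" by (rule Fc[OF x'])
    qed
  qed
  ultimately show ?thesis unfolding isom_def by blast
qed




lemma wo_props:
  assumes "Well_order r"
  shows "antisym r" "trans r" "wf (r - Id)"
    "\<And>x. x \<in> Field r \<Longrightarrow> (x, x) \<in> r"
    "\<And>x y. x \<in> Field r \<Longrightarrow> y \<in> Field r \<Longrightarrow> x \<noteq> y \<Longrightarrow> (x, y) \<in> r \<or> (y, x) \<in> r"
  using assms unfolding well_order_on_def linear_order_on_def partial_order_on_def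
    preorder_on_def total_on_def refl_on_def by auto

lemma the_max:
  assumes r: "Well_order r" and m: "m \<in> S" and mx: "\<forall>y\<in>S. (y, m) \<in> r"
  shows "(THE m. m \<in> S \<and> (\<forall>y\<in>S. (y, m) \<in> r)) = m"
proof (rule the_equality)
  show "m \<in> S \<and> (\<forall>y\<in>S. (y, m) \<in> r)" using m mx by blast
  fix m' assume "m' \<in> S \<and> (\<forall>y\<in>S. (y, m') \<in> r)"
  then have "(m, m') \<in> r" "(m', m) \<in> r" using m mx by auto
  then show "m' = m" using wo_props(1)[OF r] unfolding antisym_def by blast
qed

lemma prod_alg_cong: "(\<And>i. i \<in> A \<Longrightarrow> Rs i = Rs' i) \<Longrightarrow> prod_alg K A Rs = prod_alg K A Rs'"
  unfolding prod_alg_def by (simp cong: if_cong conj_cong)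

lemma R_alg_cong: "(\<And>i. i \<in> A \<Longrightarrow> Rs i = Rs' i) \<Longrightarrow> R_alg K A Rs = R_alg K A Rs'"
proof -
  assume a: "\<And>i. i \<in> A \<Longrightarrow> Rs i = Rs' i"
  have p: "prod_alg K A Rs = prod_alg K A Rs'" by (rule prod_alg_cong[OF a])
  have "{i \<in> A. coord s i \<noteq> \<zero>\<^bsub>Rs i\<^esub>} = {i \<in> A. coord s i \<noteq> \<zero>\<^bsub>Rs' i\<^esub>}" for s
    using a by auto
  then show ?thesis unfolding R_alg_def Let_def p by simp
qed

lemma B_step_cong:
  assumes r: "Well_order r" and e: "\<And>y. y \<in> S \<Longrightarrow> rec y = rec' y"
  shows "B_step K r S rec = B_step K r S rec'"
proof (cases "\<exists>m\<in>S. \<forall>y\<in>S. (y, m) \<in> r")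
  case True
  then obtain m where m: "m \<in> S" "\<forall>y\<in>S. (y, m) \<in> r" by blast
  show ?thesis unfolding B_step_def using True the_max[OF r m] e[OF m(1)] by simp
next
  case False
  then have nm: "(\<exists>m\<in>S. \<forall>y\<in>S. (y, m) \<in> r) = False" by simp
  show ?thesis unfolding B_step_def nm if_False using R_alg_cong[of S rec rec' K] e by simp
qed

lemma B_below_unfold:
  assumes r: "Well_order r"
  shows "B_below K r x = B_step K r (underS r x) (B_below K r)"
proof -
  have "B_below K r x = B_step K r (underS r x) (cut (B_below K r) (r - Id) x)"
    unfolding B_below_def by (rule wfrec[OF wo_props(3)[OF r]])
  also have "\<dots> = B_step K r (underS r x) (B_below K r)"
    by (rule B_step_cong[OF r]) (auto simp: cut_def underS_def)
  finally show ?thesis .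
qed

lemma good_step:
  assumes K: "field K" and r: "Well_order r" and g: "\<And>y. y \<in> S \<Longrightarrow> good K (rec y)"
  shows "good K (B_step K r S rec)"
proof (cases "S = {}")
  case True then show ?thesis unfolding B_step_def using good_base[OF K] by simp
next
  case ne: False
  show ?thesis
  proof (cases "\<exists>m\<in>S. \<forall>y\<in>S. (y, m) \<in> r")
    case True
    then obtain m where m: "m \<in> S" "\<forall>y\<in>S. (y, m) \<in> r" by blast
    have "good K (R_alg K UNIV (\<lambda>_. rec m))" by (rule good_R[OF K]) (use g m in blast)
    then show ?thesis unfolding B_step_def using ne True the_max[OF r m] by simp
  next
    case False
    then have nm: "(\<exists>m\<in>S. \<forall>y\<in>S. (y, m) \<in> r) = False" by simp
    have "good K (R_alg K S rec)" by (rule good_R[OF K g])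
    then show ?thesis unfolding B_step_def nm if_False using ne by simp
  qed
qed

lemma good_below:
  assumes K: "field K" and r: "Well_order r"
  shows "good K (B_below K r x)"
  using wo_props(3)[OF r]
proof (induction x rule: wf_induct_rule)
  case (less x)
  show ?case
  proof (subst B_below_unfold[OF r], rule good_step[OF K r])
    fix y assume "y \<in> underS r x"
    then have "(y, x) \<in> r - Id" unfolding underS_def by simp
    then show "good K (B_below K r y)" by (rule less)
  qed
qed

lemma good_Bs:
  assumes K: "field K" and r: "Well_order r"
  shows "good K (B_step K r S (B_below K r))"
  by (rule good_step[OF K r good_below[OF K r]])


definition oiso :: "nat rel \<Rightarrow> nat rel \<Rightarrow> nat set \<Rightarrow> nat set \<Rightarrow> (nat \<Rightarrow> nat) \<Rightarrow> bool" where
  "oiso r r' S S' f \<longleftrightarrow> bij_betw f S S' \<and> (\<forall>a\<in>S. \<forall>b\<in>S. (a, b) \<in> r \<longleftrightarrow> (f a, f b) \<in> r')"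

definition dc :: "nat rel \<Rightarrow> nat set \<Rightarrow> bool" where
  "dc r S \<longleftrightarrow> S \<subseteq> Field r \<and> (\<forall>a b. (a, b) \<in> r \<longrightarrow> b \<in> S \<longrightarrow> a \<in> S)"

lemma underS_sub: "underS r x \<subseteq> Field r"
  unfolding underS_def Field_def by blast

lemma dc_underS: assumes r: "Well_order r" shows "dc r (underS r x)"
  unfolding dc_def
proof (intro conjI allI impI)
  show "underS r x \<subseteq> Field r" by (rule underS_sub)
  fix a b assume ab: "(a, b) \<in> r" and b: "b \<in> underS r x"
  then have bx: "(b, x) \<in> r" "b \<noteq> x" unfolding underS_def by auto
  then have "(a, x) \<in> r" using ab wo_props(2)[OF r] unfolding trans_def by blast
  moreover have "a \<noteq> x"
  proof
    assume "a = x"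
    then have "(x, b) \<in> r" using ab by simp
    then show False using bx wo_props(1)[OF r] unfolding antisym_def by blast
  qed
  ultimately show "a \<in> underS r x" unfolding underS_def by simp
qed

lemma dc_Field: "dc r (Field r)"
  unfolding dc_def by (auto intro: FieldI1)

lemma step_isom:
  assumes K: "field K" and r: "Well_order r" and r': "Well_order r'"
    and S: "S \<subseteq> Field r" and S': "S' \<subseteq> Field r'" and f: "oiso r r' S S' f"
    and iso: "\<And>y. y \<in> S \<Longrightarrow> isom K (rec y) (rec' (f y))"
    and g: "\<And>y. y \<in> S \<Longrightarrow> good K (rec y)" and g': "\<And>y. y \<in> S' \<Longrightarrow> good K (rec' y)"
  shows "isom K (B_step K r S rec) (B_step K r' S' rec')"
proof -
  have bij: "bij_betw f S S'" and ord: "\<And>a b. a \<in> S \<Longrightarrow> b \<in> S \<Longrightarrow> (a, b) \<in> r \<longleftrightarrow> (f a, f b) \<in> r'"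
    using f unfolding oiso_def by auto
  have img: "f ` S = S'" using bij unfolding bij_betw_def by simp
  show ?thesis
  proof (cases "S = {}")
    case True
    then have "S' = {}" using img by simp
    then show ?thesis unfolding B_step_def using True isom_refl by simp
  next
    case ne: False
    then have ne': "S' \<noteq> {}" using img by auto
    show ?thesis
    proof (cases "\<exists>m\<in>S. \<forall>y\<in>S. (y, m) \<in> r")
      case True
      then obtain m where m: "m \<in> S" "\<forall>y\<in>S. (y, m) \<in> r" by blast
      have fm: "f m \<in> S'" using m img by blast
      have fmx: "\<forall>y\<in>S'. (y, f m) \<in> r'"
      proof
        fix y assume "y \<in> S'"
        then obtain z where "z \<in> S" "y = f z" using img by blast
        then show "(y, f m) \<in> r'" using ord m by blast
      qed
      have T': "\<exists>m\<in>S'. \<forall>y\<in>S'. (y, m) \<in> r'" using fm fmx by blast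
      have e1: "B_step K r S rec = R_alg K UNIV (\<lambda>_. rec m)"
        unfolding B_step_def using ne True the_max[OF r m] by simp
      have e2: "B_step K r' S' rec' = R_alg K UNIV (\<lambda>_. rec' (f m))"
        unfolding B_step_def using ne' T' the_max[OF r' fm fmx] by simp
      have "isom K (R_alg K UNIV (\<lambda>_. rec m)) (R_alg K UNIV (\<lambda>_. rec' (f m)))"
        by (rule R_cong[where g=id and A=UNIV and A'=UNIV, OF K bij_betw_id]) (use iso m g g' fm in auto)
      then show ?thesis using e1 e2 by simp
    next
      case False
      then have nm: "(\<exists>m\<in>S. \<forall>y\<in>S. (y, m) \<in> r) = False" by simp
      have nm': "(\<exists>m\<in>S'. \<forall>y\<in>S'. (y, m) \<in> r') = False"
      proof -
        have "\<not> (\<exists>m\<in>S'. \<forall>y\<in>S'. (y, m) \<in> r')"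
        proof
          assume "\<exists>m\<in>S'. \<forall>y\<in>S'. (y, m) \<in> r'"
          then obtain m' where m': "m' \<in> S'" "\<forall>y\<in>S'. (y, m') \<in> r'" by blast
          then obtain m where m: "m \<in> S" "m' = f m" using img by blast
          have "\<forall>y\<in>S. (y, m) \<in> r"
          proof
            fix y assume y: "y \<in> S"
            then have "f y \<in> S'" using img by blast
            then have "(f y, f m) \<in> r'" using m' m by simp
            then show "(y, m) \<in> r" using ord[OF y m(1)] by simp
          qed
          then show False using False m by blast
        qed
        then show ?thesis by simp
      qed
      have e1: "B_step K r S rec = R_alg K S rec" unfolding B_step_def nm if_False using ne by simp
      have e2: "B_step K r' S' rec' = R_alg K S' rec'" unfolding B_step_def nm' if_False using ne' by simp
      have "isom K (R_alg K S rec) (R_alg K S' rec')"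
        by (rule R_cong[where g=f and Rs=rec and Rs'=rec' and A=S and A'=S', OF K bij iso g g'])
      then show ?thesis using e1 e2 by simp
    qed
  qed
qed

lemma oiso_underS:
  assumes r: "Well_order r" and r': "Well_order r'" and S: "dc r S" and S': "dc r' S'"
    and f: "oiso r r' S S' f" and y: "y \<in> S"
  shows "oiso r r' (underS r y) (underS r' (f y)) f"
proof -
  have bij: "bij_betw f S S'" and ord: "\<And>a b. a \<in> S \<Longrightarrow> b \<in> S \<Longrightarrow> (a, b) \<in> r \<longleftrightarrow> (f a, f b) \<in> r'"
    using f unfolding oiso_def by auto
  have img: "f ` S = S'" and inj: "inj_on f S" using bij unfolding bij_betw_def by auto
  have sub: "underS r y \<subseteq> S" using S y unfolding dc_def underS_def by blast
  have fy: "f y \<in> S'" using img y by blast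
  have "f ` underS r y = underS r' (f y)"
  proof (intro equalityI subsetI)
    fix w assume "w \<in> f ` underS r y"
    then obtain z where z: "z \<in> underS r y" "w = f z" by blast
    then have zS: "z \<in> S" and zy: "(z, y) \<in> r" "z \<noteq> y" using sub unfolding underS_def by auto
    have "(f z, f y) \<in> r'" using ord[OF zS y] zy by simp
    moreover have "f z \<noteq> f y" using inj zS y zy(2) unfolding inj_on_def by blast
    ultimately show "w \<in> underS r' (f y)" using z unfolding underS_def by simp
  next
    fix w assume w: "w \<in> underS r' (f y)"
    then have wfy: "(w, f y) \<in> r'" "w \<noteq> f y" unfolding underS_def by auto
    then have "w \<in> S'" using S' fy unfolding dc_def by blast
    then obtain z where z: "z \<in> S" "w = f z" using img by blast
    then have "(z, y) \<in> r" using ord[OF z(1) y] wfy by simp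
    moreover have "z \<noteq> y" using z wfy by blast
    ultimately show "w \<in> f ` underS r y" using z unfolding underS_def by blast
  qed
  moreover have "inj_on f (underS r y)" using inj sub inj_on_subset by blast
  ultimately show ?thesis unfolding oiso_def bij_betw_def using ord sub by blast
qed

lemma below_isom:
  assumes K: "field K" and r: "Well_order r" and r': "Well_order r'" and S: "dc r S" and S': "dc r' S'"
    and f: "oiso r r' S S' f"
  shows "y \<in> S \<Longrightarrow> isom K (B_below K r y) (B_below K r' (f y))"
  using wo_props(3)[OF r]
proof (induction y rule: wf_induct_rule)
  case (less y)
  have f2: "oiso r r' (underS r y) (underS r' (f y)) f" by (rule oiso_underS[OF r r' S S' f less.prems])
  have "isom K (B_step K r (underS r y) (B_below K r)) (B_step K r' (underS r' (f y)) (B_below K r'))"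
  proof (rule step_isom[OF K r r' underS_sub underS_sub f2])
    fix z assume z: "z \<in> underS r y"
    then have "(z, y) \<in> r - Id" unfolding underS_def by simp
    moreover have "z \<in> S" using z S less.prems unfolding dc_def underS_def by blast
    ultimately show "isom K (B_below K r z) (B_below K r' (f z))" by (rule less.IH)
  qed (auto intro: good_below[OF K r] good_below[OF K r'])
  then show ?case by (simp only: B_below_unfold[OF r, symmetric] B_below_unfold[OF r', symmetric])
qed

lemma less_isom:
  assumes K: "field K" and r: "Well_order r" and s: "Well_order s" and rs: "(r, s) \<in> ordLess"
  shows "\<exists>x\<in>Field s. isom K (B_ord K r) (B_below K s x)"
proof -
  have "\<exists>a\<in>Field s. r =o Restr s (underS s a)" using ordLess_iff_ordIso_Restr[OF s r] rs by simp
  then obtain x where x: "x \<in> Field s" and io: "r =o Restr s (underS s x)" by blast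
  then obtain f where f: "BNF_Wellorder_Embedding.iso r (Restr s (underS s x)) f" unfolding ordIso_def by blast
  have "wo_rel.ofilter s (underS s x)" by (rule wo_rel.underS_ofilter) (simp add: wo_rel_def s)
  then have FR: "Field (Restr s (underS s x)) = underS s x" by (rule Field_Restr_ofilter[OF s])
  have bij: "bij_betw f (Field r) (underS s x)" and ord0: "\<forall>a\<in>Field r. \<forall>b\<in>Field r. (a, b) \<in> r \<longleftrightarrow> (f a, f b) \<in> Restr s (underS s x)"
    using f FR unfolding BNF_Wellorder_Embedding.iso_iff2 by auto
  have fin: "\<And>a. a \<in> Field r \<Longrightarrow> f a \<in> underS s x" using bij unfolding bij_betw_def by blast
  have "oiso r s (Field r) (underS s x) f"
    unfolding oiso_def
  proof (intro conjI bij ballI)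
    fix a b assume a: "a \<in> Field r" and b: "b \<in> Field r"
    show "(a, b) \<in> r \<longleftrightarrow> (f a, f b) \<in> s" using ord0 a b fin[OF a] fin[OF b] by simp
  qed
  then have "isom K (B_step K r (Field r) (B_below K r)) (B_step K s (underS s x) (B_below K s))"
  proof (rule step_isom[OF K r s subset_refl underS_sub])
    fix y assume "y \<in> Field r"
    then show "isom K (B_below K r y) (B_below K s (f y))"
      by (rule below_isom[OF K r s dc_Field dc_underS[OF s] \<open>oiso r s (Field r) (underS s x) f\<close>])
  qed (rule good_below[OF K r], rule good_below[OF K s])
  then have "isom K (B_ord K r) (B_below K s x)"
    unfolding B_ord_def by (simp only: B_below_unfold[OF s, symmetric])
  then show ?thesis using x by blast
qed




lemma bij_pred: "bij_betw (\<lambda>n::nat. n - 1) (UNIV - {0}) UNIV"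
  unfolding bij_betw_def
proof
  show "inj_on (\<lambda>n::nat. n - 1) (UNIV - {0})" by (rule inj_onI) auto
  show "(\<lambda>n::nat. n - 1) ` (UNIV - {0}) = UNIV"
  proof (intro equalityI subsetI)
    fix k :: nat show "k \<in> (\<lambda>n. n - 1) ` (UNIV - {0})" by (rule image_eqI[where x="Suc k"]) auto
  qed auto
qed

lemma succ_isom:
  assumes K: "field K" and g: "good K M"
  shows "isom K (R_alg K UNIV (\<lambda>_. M)) (ring_dprod K M (R_alg K UNIV (\<lambda>_. M)))"
proof -
  have 1: "isom K (R_alg K UNIV (\<lambda>_. M)) (ring_dprod K M (R_alg K (UNIV - {0}) (\<lambda>_. M)))"
    using split_iso[where Rs="\<lambda>_. M" and A=UNIV and j=0, OF K g] by simp
  have 2: "isom K (R_alg K (UNIV - {0}) (\<lambda>_. M)) (R_alg K UNIV (\<lambda>_. M))"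
    by (rule R_cong[where g="\<lambda>n. n - 1", OF K bij_pred]) (use g isom_refl in auto)
  show ?thesis by (rule isom_trans[OF 1 D_cong[OF isom_refl 2]])
qed

lemma chain:
  assumes a: "isom K Ma (ring_dprod K Mb Mc)" and b: "isom K Mb (ring_dprod K Md Mb)"
  shows "isom K Ma (ring_dprod K Md Ma)"
proof -
  have 1: "isom K Ma (ring_dprod K (ring_dprod K Md Mb) Mc)"
    by (rule isom_trans[OF a D_cong[OF b isom_refl]])
  have 2: "isom K Ma (ring_dprod K Md (ring_dprod K Mb Mc))"
    by (rule isom_trans[OF 1 D_assoc])
  show ?thesis by (rule isom_trans[OF 2 D_cong[OF isom_refl isom_sym[OF a]]])
qed

lemma abs_step:
  assumes K: "field K" and s: "Well_order s" and S: "dc s S" and x: "x \<in> S"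
    and IH: "\<And>z y. z \<in> S \<Longrightarrow> y \<in> underS s z \<Longrightarrow>
        isom K (B_below K s z) (ring_dprod K (B_below K s y) (B_below K s z))"
  shows "isom K (B_step K s S (B_below K s)) (ring_dprod K (B_below K s x) (B_step K s S (B_below K s)))"
proof -
  let ?B = "B_below K s"
  have ne: "S \<noteq> {}" using x by blast
  have SF: "S \<subseteq> Field s" using S unfolding dc_def by blast
  have gB: "\<And>y. good K (?B y)" by (rule good_below[OF K s])
  show ?thesis
  proof (cases "\<exists>m\<in>S. \<forall>y\<in>S. (y, m) \<in> s")
    case True
    then obtain m where m: "m \<in> S" "\<forall>y\<in>S. (y, m) \<in> s" by blast
    have e1: "B_step K s S ?B = R_alg K UNIV (\<lambda>_. ?B m)"
      unfolding B_step_def using ne True the_max[OF s m] by simp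
    have su: "isom K (B_step K s S ?B) (ring_dprod K (?B m) (B_step K s S ?B))"
      unfolding e1 by (rule succ_isom[OF K gB])
    show ?thesis
    proof (cases "x = m")
      case True
      then show ?thesis using su by simp
    next
      case False
      then have "x \<in> underS s m" using m x unfolding underS_def by simp
      then have "isom K (?B m) (ring_dprod K (?B x) (?B m))" by (rule IH[OF m(1)])
      then show ?thesis by (rule chain[OF su])
    qed
  next
    case False
    then have nm: "(\<exists>m\<in>S. \<forall>y\<in>S. (y, m) \<in> s) = False" by simp
    have e1: "B_step K s S ?B = R_alg K S ?B" unfolding B_step_def nm if_False using ne by simp
    let ?T = "{z\<in>S. (x, z) \<in> s \<and> z \<noteq> x}"
    obtain y where yS: "y \<in> S" and yx: "(y, x) \<notin> s" using False x by blast
    have yne: "y \<noteq> x" using yx wo_props(4)[OF s] SF x by blast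
    have "(x, y) \<in> s" using wo_props(5)[OF s] SF x yS yne yx by blast
    then have yT: "y \<in> ?T" using yS yne by blast
    obtain y0 where y0T: "y0 \<in> ?T" and y0min: "\<And>w. (w, y0) \<in> s - Id \<Longrightarrow> w \<notin> ?T"
      using wfE_min[OF wo_props(3)[OF s] yT] by blast
    have y0S: "y0 \<in> S" and xy0: "(x, y0) \<in> s" "y0 \<noteq> x" using y0T by auto
    have xU: "x \<in> underS s y0" using xy0 unfolding underS_def by simp
    have xmax: "\<forall>w\<in>underS s y0. (w, x) \<in> s"
    proof
      fix w assume w: "w \<in> underS s y0"
      then have wy0: "(w, y0) \<in> s" "w \<noteq> y0" unfolding underS_def by auto
      have wS: "w \<in> S" using S wy0 y0S unfolding dc_def by blast
      show "(w, x) \<in> s"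
      proof (rule ccontr)
        assume nwx: "(w, x) \<notin> s"
        then have "w \<noteq> x" using wo_props(4)[OF s] SF x by blast
        then have "(x, w) \<in> s" using wo_props(5)[OF s] SF x wS nwx by blast
        then have "w \<in> ?T" using wS \<open>w \<noteq> x\<close> by blast
        moreover have "(w, y0) \<in> s - Id" using wy0 by simp
        ultimately show False using y0min by blast
      qed
    qed
    have neU: "underS s y0 \<noteq> {}" using xU by blast
    have ey0: "?B y0 = R_alg K UNIV (\<lambda>_. ?B x)"
    proof -
      have "?B y0 = B_step K s (underS s y0) ?B" by (rule B_below_unfold[OF s])
      also have "\<dots> = R_alg K UNIV (\<lambda>_. ?B x)"
        unfolding B_step_def using neU xU xmax the_max[OF s xU xmax] by auto
      finally show ?thesis .
    qed
    have b: "isom K (?B y0) (ring_dprod K (?B x) (?B y0))"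
      unfolding ey0 by (rule succ_isom[OF K gB])
    have a: "isom K (R_alg K S ?B) (ring_dprod K (?B y0) (R_alg K (S - {y0}) ?B))"
      by (rule split_iso[OF K gB y0S])
    have "isom K (R_alg K S ?B) (ring_dprod K (?B x) (R_alg K S ?B))" by (rule chain[OF a b])
    then show ?thesis unfolding e1 .
  qed
qed

lemma abs_below:
  assumes K: "field K" and s: "Well_order s"
  shows "\<And>y. y \<in> underS s z \<Longrightarrow> isom K (B_below K s z) (ring_dprod K (B_below K s y) (B_below K s z))"
  using wo_props(3)[OF s]
proof (induction z rule: wf_induct_rule)
  case (less z)
  have "isom K (B_step K s (underS s z) (B_below K s)) (ring_dprod K (B_below K s y) (B_step K s (underS s z) (B_below K s)))"
  proof (rule abs_step[OF K s dc_underS[OF s] less.prems])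
    fix z' y' assume z': "z' \<in> underS s z" and y': "y' \<in> underS s z'"
    have "(z', z) \<in> s - Id" using z' unfolding underS_def by simp
    then show "isom K (B_below K s z') (ring_dprod K (B_below K s y') (B_below K s z'))"
      using y' by (rule less.IH)
  qed
  then show ?case by (simp only: B_below_unfold[OF s, symmetric])
qed

lemma abs_field:
  assumes K: "field K" and s: "Well_order s" and x: "x \<in> Field s"
  shows "isom K (B_ord K s) (ring_dprod K (B_below K s x) (B_ord K s))"
  unfolding B_ord_def
proof (rule abs_step[OF K s dc_Field x])
  fix z y assume "z \<in> Field s" "y \<in> underS s z"
  then show "isom K (B_below K s z) (ring_dprod K (B_below K s y) (B_below K s z))"
    by (intro abs_below[OF K s])
qed

theorem corollary6p10:
  fixes K :: "'k ring" and r s :: "nat rel"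
  assumes "field K"
    and "Well_order r" and "Well_order s"
    and "(r, s) \<in> ordLess"
  shows "\<exists>h. h \<in> alg_iso K (B_ord K s) (ring_dprod K (B_ord K r) (B_ord K s))"
proof -
  obtain x where x: "x \<in> Field s" and i1: "isom K (B_ord K r) (B_below K s x)"
    using less_isom[OF assms] by blast
  have i2: "isom K (B_ord K s) (ring_dprod K (B_below K s x) (B_ord K s))"
    by (rule abs_field[OF assms(1) assms(3) x])
  have "isom K (B_ord K s) (ring_dprod K (B_ord K r) (B_ord K s))"
    by (rule isom_trans[OF i2 D_cong[OF isom_sym[OF i1] isom_refl]])
  then show ?thesis unfolding isom_def by blast
qed


end
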